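(* Let $\gamma:\mathbb N\to[0,1]$ be a rate function. For every process distribution $\mu\in\mathscr C^\alpha$ with coordinate process $\mathbf X$, $\mu$-almost surely \[\lim_{t\to\infty}g_t(\mathbf X)=\begin{cases}+1&\text{if }\mu\in\mathscr C^\alpha\cap\mathscr R^\alpha_\gamma,\\-1&\text{if }\mu\in\mathscr C^\alpha\setminus\mathscr R^\alpha_\gamma.\end{cases}\]
   Context: $X_t$ is the $t$-th coordinate of $[0,1]^{\mathbb N}$. $\alpha(\mathfrak U,\mathfrak V):=\sup_{U\in\mathfrak U,V\in\mathfrak V}|\mu(U\cap V)-\mu(U)\mu(V)|$; $\alpha(m):=\sup_j\alpha(\sigma(X_1,\dots,X_j),\sigma(X_t:t\ge j+m))$; $\|\boldsymbol\alpha\|:=\sum_m\alpha(m)$. $\mathscr C^\alpha$ is the class of stationary $\alpha$-mixing processes with $\|\boldsymbol\alpha\|<\infty$; $\mathscr R^\alpha_\gamma$ is the class of processes with $\alpha(m)\le\gamma(m)$ for all $m\in\mathbb N$. Dyadic sets: $I_{\ell,i}=[i2^{-\ell},(i+1)2^{-\ell})$, $i=0,\dots,2^\ell-1$ (last interval closed); $\Delta_{k,\ell}$ the cubes $I_{\ell,i_1}\times\cdots\times I_{\ell,i_k}$; $\mathcal D_{k,\ell}$ the unions of cubes of $\Delta_{k,\ell}$. Empirical estimator: for $n>m$, $j\in\{1,\dots,n-m\}$, $j':=n-m-j+1$, $\mu_t(\mathbf X,B):=\frac1t\sum_{i=0}^{t-1}\mathbf 1\{(X_{ik+1},\dots,X_{(i+1)k})\in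 B\}$ for $B\subseteq[0,1]^k$, $\gamma_{t,n}^{m,j}(\mathbf X,A,B):=\frac1t\sum_{i=0}^{t-1}\mathbf 1\{(X_{in+1},\dots,X_{in+j})\in A\}\mathbf 1\{(X_{in+j+m},\dots,X_{(i+1)n})\in B\}$, $\widehat\alpha_{t,n}^{\ell}(\mathbf X,m):=\max_{j}\max_{A\in\mathcal D_{j,\ell},B\in\mathcal D_{j',\ell}}|\gamma_{t,n}^{m,j}(\mathbf X,A,B)-\mu_t(\mathbf X,A)\mu_t(\mathbf X,B)|$. Parameters: $(M_t),(\ell_t),(n_t)$ increasing sequences of positive integers with $n_t>M_t$; $\delta\in(0,1)$, $(\delta_t)$ positive with $\sum_t\delta_t=\delta$; $(\epsilon_t)$ decreasing positive with $\epsilon_t\to0$. With $C_{m,\ell,n}:=m\cdot2^{2^{n\ell}+2^{m\ell+1}+1}$, for each $m$ let $\tau_t(m):=\lceil C_{m,\ell_t,n_t}/(m\epsilon_t^2\delta_t)\rceil$ and $\widehat\alpha_t(\mathbf X,m):=\widehat\alpha_{\tau_t(m),n_t}^{\ell_t}(\mathbf X,m)$. The test is $g_t(\mathbf X):=+1$ if $\widehat\alpha_t(\mathbf X,m)\le\gamma(m)+\epsilon_t$ for all $m\in\{1,\dots,M_t\}$, and $g_t(\mathbf X):=-1$ otherwise. *)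

theory Defs
  imports "HOL-Probability.Probability"
begin

text \<open>A sample path is \<open>\<omega> :: nat \<Rightarrow> real\<close>; the paper's coordinate X_t (t = 1,2,...)
  is \<open>\<omega> (t - 1)\<close>.\<close>

definition Omega :: "(nat \<Rightarrow> real) measure" where
  "Omega = (\<Pi>\<^sub>M i\<in>(UNIV::nat set). restrict_space borel {0..1::real})"

definition coord :: "nat \<Rightarrow> (nat \<Rightarrow> real) \<Rightarrow> real" where
  "coord t \<omega> = \<omega> (t - 1)"

definition process_distribution :: "(nat \<Rightarrow> real) measure \<Rightarrow> bool" where
  "process_distribution \<mu> \<longleftrightarrow> prob_space \<mu> \<and> sets \<mu> = sets Omega"

definition stationary :: "(nat \<Rightarrow> real) measure \<Rightarrow> bool" where
  "stationary \<mu> \<longleftrightarrow> distr \<mu> Omega (\<lambda>\<omega> i. \<omega> (Suc i)) = \<mu>"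

definition gen_sigma :: "nat set \<Rightarrow> (nat \<Rightarrow> real) set set" where
  "gen_sigma T = sigma_sets (space Omega)
      (\<Union>t\<in>T. {coord t -` B \<inter> space Omega | B. B \<in> sets (borel :: real measure)})"

definition alpha_coef :: "(nat \<Rightarrow> real) measure \<Rightarrow> nat \<Rightarrow> real" where
  "alpha_coef \<mu> m = (\<Squnion>j\<in>{1..}. \<Squnion>p\<in>gen_sigma {1..j} \<times> gen_sigma {j+m..}.
       \<bar>measure \<mu> (fst p \<inter> snd p) - measure \<mu> (fst p) * measure \<mu> (snd p)\<bar>)"

definition class_C :: "(nat \<Rightarrow> real) measure set" where
  "class_C = {\<mu>. process_distribution \<mu> \<and> stationary \<mu> \<and>
                 summable (\<lambda>m. alpha_coef \<mu> (Suc m))}"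

definition class_R :: "(nat \<Rightarrow> real) \<Rightarrow> (nat \<Rightarrow> real) measure set" where
  "class_R \<gamma> = {\<mu>. process_distribution \<mu> \<and> (\<forall>m\<ge>1. alpha_coef \<mu> m \<le> \<gamma> m)}"

definition dyadic_interval :: "nat \<Rightarrow> nat \<Rightarrow> real set" where
  "dyadic_interval l i =
     (if i = 2^l - 1 then {real i / 2^l .. (real i + 1) / 2^l}
      else {real i / 2^l ..< (real i + 1) / 2^l})"

text \<open>Points of [0,1]^k are lists of length k.\<close>
definition dyadic_cube :: "nat \<Rightarrow> nat list \<Rightarrow> real list set" where
  "dyadic_cube l is = {xs. length xs = length is \<and>
                          (\<forall>r<length is. xs ! r \<in> dyadic_interval l (is ! r))}"

definition dyadic_cube_indices :: "nat \<Rightarrow> nat \<Rightarrow> nat list set" where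
  "dyadic_cube_indices k l = {is. length is = k \<and> (\<forall>r<k. is ! r < 2^l)}"

definition dyadic_unions :: "nat \<Rightarrow> nat \<Rightarrow> real list set set" where
  "dyadic_unions k l = {\<Union>(dyadic_cube l ` S) | S. S \<subseteq> dyadic_cube_indices k l}"

definition seg :: "(nat \<Rightarrow> real) \<Rightarrow> nat \<Rightarrow> nat \<Rightarrow> real list" where
  "seg \<omega> a k = map (\<lambda>r. coord (a + r + 1) \<omega>) [0..<k]"

definition mu_emp :: "(nat \<Rightarrow> real) \<Rightarrow> nat \<Rightarrow> nat \<Rightarrow> real list set \<Rightarrow> real" where
  "mu_emp \<omega> k t B = (\<Sum>i<t. indicator B (seg \<omega> (i * k) k)) / real t"

text \<open>\<open>\<gamma>^{m,j}_{t,n}(X,A,B)\<close>, with \<open>j' = n - m - j + 1\<close>\<close>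
definition gam_emp :: "(nat \<Rightarrow> real) \<Rightarrow> nat \<Rightarrow> nat \<Rightarrow> nat \<Rightarrow> nat \<Rightarrow>
                        real list set \<Rightarrow> real list set \<Rightarrow> real" where
  "gam_emp \<omega> t n m j A B =
     (\<Sum>i<t. indicator A (seg \<omega> (i * n) j) *
             indicator B (seg \<omega> (i * n + j + m - 1) (n - m - j + 1))) / real t"

text \<open>\<open>\<alpha>-hat^l_{t,n}(X,m)\<close> (for \<open>n > m\<close>)\<close>
definition alpha_hat :: "(nat \<Rightarrow> real) \<Rightarrow> nat \<Rightarrow> nat \<Rightarrow> nat \<Rightarrow> nat \<Rightarrow> real" where
  "alpha_hat \<omega> t n l m =
     Max {\<bar>gam_emp \<omega> t n m j A B - mu_emp \<omega> j t A * mu_emp \<omega> (n - m - j + 1) t B\<bar> | j A B.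
            j \<in> {1..n - m} \<and> A \<in> dyadic_unions j l \<and> B \<in> dyadic_unions (n - m - j + 1) l}"

definition C_const :: "nat \<Rightarrow> nat \<Rightarrow> nat \<Rightarrow> nat" where
  "C_const m l n = m * 2 ^ (2 ^ (n * l) + 2 ^ (m * l + 1) + 1)"

definition tau :: "(nat \<Rightarrow> nat) \<Rightarrow> (nat \<Rightarrow> nat) \<Rightarrow> (nat \<Rightarrow> real) \<Rightarrow> (nat \<Rightarrow> real) \<Rightarrow>
                    nat \<Rightarrow> nat \<Rightarrow> nat" where
  "tau ls ns \<delta>s \<epsilon> t m =
     nat \<lceil>real (C_const m (ls t) (ns t)) / (real m * (\<epsilon> t)\<^sup>2 * \<delta>s t)\<rceil>"

definition alpha_hat_t :: "(nat \<Rightarrow> nat) \<Rightarrow> (nat \<Rightarrow> nat) \<Rightarrow> (nat \<Rightarrow> real) \<Rightarrow> (nat \<Rightarrow> real) \<Rightarrow>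
                           nat \<Rightarrow> (nat \<Rightarrow> real) \<Rightarrow> nat \<Rightarrow> real" where
  "alpha_hat_t ls ns \<delta>s \<epsilon> t \<omega> m = alpha_hat \<omega> (tau ls ns \<delta>s \<epsilon> t m) (ns t) (ls t) m"

definition test_g :: "(nat \<Rightarrow> real) \<Rightarrow> (nat \<Rightarrow> nat) \<Rightarrow> (nat \<Rightarrow> nat) \<Rightarrow> (nat \<Rightarrow> nat) \<Rightarrow>
                      (nat \<Rightarrow> real) \<Rightarrow> (nat \<Rightarrow> real) \<Rightarrow> nat \<Rightarrow> (nat \<Rightarrow> real) \<Rightarrow> real" where
  "test_g \<gamma> Ms ls ns \<delta>s \<epsilon> t \<omega> =
     (if \<forall>m\<in>{1..Ms t}. alpha_hat_t ls ns \<delta>s \<epsilon> t \<omega> m \<le> \<gamma> m + \<epsilon> t then 1 else -1)"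

end

theory Submission
  imports Defs
begin

lemma space_Omega: "space Omega = {\<omega>. \<forall>i. \<omega> i \<in> {0..1::real}}"
  unfolding Omega_def by (auto simp: space_PiM PiE_def Pi_def)

lemma divlem: assumes "(a::nat) \<ge> 1" "q \<ge> 1" shows "(a*q - 1) div q = a - 1"
proof -
  obtain b r where b: "a = Suc b" "q = Suc r" using assms by (cases a; cases q) auto
  have "a*q - 1 = r + b*q" using b by (simp add: algebra_simps)
  moreover have "(r + b*q) div q = b" 
  proof -
    have "r < q" "q \<noteq> 0" using b by auto
    then show ?thesis by (simp add: div_mult_self2)
  qed
  ultimately show ?thesis using b by (metis diff_Suc_1)
qed

definition idx :: "nat \<Rightarrow> real \<Rightarrow> nat" where
  "idx l x = (if x < 1 then nat \<lfloor>x * 2^l\<rfloor> else 2^l - 1)"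

lemma idx_lt: assumes "x \<in> {0..1}" shows "idx l x < 2^l"
proof (cases "x < 1")
  case True
  have "x * 2^l < 2^l" using True by simp
  then have "\<lfloor>x * 2^l\<rfloor> < 2^l" by (simp add: floor_less_iff) 
  then show ?thesis using True assms unfolding idx_def
    by (simp add: nat_less_iff)
next
  case False then show ?thesis unfolding idx_def by simp
qed

lemma idx_bounds: assumes "x \<in> {0..1}"
  shows "real (idx l x) / 2^l \<le> x" "x \<le> (real (idx l x) + 1) / 2^l"
proof -
  have "real (idx l x) \<le> x * 2^l \<and> x * 2^l \<le> real (idx l x) + 1"
  proof (cases "x < 1")
    case True
    have "0 \<le> \<lfloor>x * 2^l\<rfloor>" using assms by simp
    then show ?thesis using True unfolding idx_def 
      by (simp add: of_nat_nat)
  next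
    case False
    then have "x = 1" using assms by simp
    moreover have "real (2^l - 1::nat) = 2^l - 1" by (simp add: of_nat_diff)
    ultimately show ?thesis unfolding idx_def by simp
  qed
  moreover have L: "(0::real) < 2^l" by simp
  ultimately show "real (idx l x) / 2^l \<le> x"
    using pos_divide_le_eq[OF L] by blast
  show "x \<le> (real (idx l x) + 1) / 2^l"
    using pos_le_divide_eq[OF L] \<open>_ \<and> _\<close> by blast
qed

lemma idx_approx: assumes "x \<in> {0..1}" shows "\<bar>real (idx l x) / 2^l - x\<bar> \<le> 1 / 2^l"
proof -
  have "(real (idx l x) + 1) / 2^l = real (idx l x) / 2^l + 1 / 2^l" by (simp add: add_divide_distrib)
  then show ?thesis using idx_bounds[OF assms, of l] by linarith
qed

lemma idx_iff: assumes "x \<in> {0..1}" "i < 2^l"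
  shows "x \<in> dyadic_interval l i \<longleftrightarrow> idx l x = i"
proof
  assume "x \<in> dyadic_interval l i"
  show "idx l x = i"
  proof (cases "i = 2^l - 1")
    case True
    then have x: "real i / 2^l \<le> x" "x \<le> (real i + 1)/2^l" 
      using \<open>x \<in> dyadic_interval l i\<close> unfolding dyadic_interval_def by auto
    have "real i \<le> x * 2^l" using x(1) by (simp add: field_simps)
    show ?thesis
    proof (cases "x < 1")
      case True
      have ri: "real i = 2^l - 1" using \<open>i = 2^l - 1\<close> by (simp add: of_nat_diff)
      have "x * 2^l < 2^l" using True by simp
      then have "\<lfloor>x * 2^l\<rfloor> = int i" using \<open>real i \<le> x * 2^l\<close> ri
        by (intro floor_unique) auto
      then show ?thesis using True unfolding idx_def by simp
    next
      case False then show ?thesis using \<open>i = 2^l - 1\<close> unfolding idx_def by simp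
    qed
  next
    case False
    then have x: "real i / 2^l \<le> x" "x < (real i + 1)/2^l" 
      using \<open>x \<in> dyadic_interval l i\<close> unfolding dyadic_interval_def by auto
    have "i + 1 \<le> 2^l - 1 + 1" using assms(2) False by linarith
    have "i + 1 \<le> 2^l" using assms(2) by simp
    then have "real (i+1) \<le> real ((2::nat)^l)" by (simp only: of_nat_le_iff)
    then have "real i + 1 \<le> 2^l" by simp
    then have "(real i + 1) / 2^l \<le> 1" by simp
    then have "x < 1" using x(2) by linarith
    have "\<lfloor>x * 2^l\<rfloor> = int i" using x by (intro floor_unique) (auto simp: field_simps)
    then show ?thesis using \<open>x < 1\<close> unfolding idx_def by simp
  qed
next
  assume h: "idx l x = i"
  have b: "real i / 2^l \<le> x" "x \<le> (real i + 1) / 2^l" using idx_bounds[OF assms(1), of l] h by auto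
  show "x \<in> dyadic_interval l i"
  proof (cases "i = 2^l - 1")
    case True then show ?thesis using b unfolding dyadic_interval_def by auto
  next
    case False
    have "x < (real i + 1) / 2^l"
    proof (cases "x < 1")
      case True
      then have "nat \<lfloor>x * 2^l\<rfloor> = i" using h unfolding idx_def by simp
      moreover have "0 \<le> \<lfloor>x * 2^l\<rfloor>" using assms(1) by simp
      ultimately have "\<lfloor>x * 2^l\<rfloor> = int i" by linarith
      then have "x * 2^l < real i + 1" by linarith
      then show ?thesis by (simp add: field_simps)
    next
      case False then show ?thesis using h \<open>i \<noteq> 2^l - 1\<close> unfolding idx_def by simp
    qed
    then show ?thesis using b False unfolding dyadic_interval_def by auto
  qed
qed

lemma idx_refine: assumes "x \<in> {0..1}" "l \<le> l'"
  shows "idx l x = idx l' x div 2^(l'-l)"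
proof -
  have p: "(2::nat)^l' = 2^l * 2^(l'-l)" using assms(2) by (simp add: power_add[symmetric])
  show ?thesis
  proof (cases "x < 1")
    case True
    have "\<lfloor>x * 2^l\<rfloor> = \<lfloor>(x * 2^l') / real_of_int (2^(l'-l))\<rfloor>"
    proof -
      have p': "(2::real)^l' = 2^l * 2^(l'-l)" 
        using assms(2) by (simp add: power_add[symmetric])
      have "x * 2^l = (x * 2^l') / 2^(l'-l)" unfolding p' by simp
      then show ?thesis by simp
    qed
    also have "\<dots> = \<lfloor>x * 2^l'\<rfloor> div 2^(l'-l)" by (rule floor_divide_real_eq_div) simp
    finally have e: "\<lfloor>x * 2^l\<rfloor> = \<lfloor>x * 2^l'\<rfloor> div 2^(l'-l)" .
    have "0 \<le> \<lfloor>x * 2^l'\<rfloor>" using assms by simp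
    then show ?thesis using True e unfolding idx_def by (simp add: nat_div_distrib nat_power_eq)
  next
    case False
    have "(2^l' - 1) div 2^(l'-l) = (2::nat)^l - 1"
      using divlem[of "2^l" "2^(l'-l)"] p by simp
    then show ?thesis using False unfolding idx_def by simp
  qed
qed


lemma idx_measurable[measurable]: "idx l \<in> measurable borel (count_space UNIV)"
  unfolding idx_def by measurable

lemma idx_eq_sets: "{x. idx l x = c} \<in> sets borel"
proof -
  have "idx l -` {c} \<inter> space borel \<in> sets borel"
    by (rule measurable_sets[OF idx_measurable]) simp
  then show ?thesis by (simp add: vimage_def)
qed

definition code :: "nat \<Rightarrow> nat \<Rightarrow> nat \<Rightarrow> (nat \<Rightarrow> real) \<Rightarrow> nat list" where
  "code l a k \<omega> = map (\<lambda>r. idx l (\<omega> (a + r))) [0..<k]"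

definition cyl :: "nat \<Rightarrow> nat \<Rightarrow> nat \<Rightarrow> nat list set \<Rightarrow> (nat \<Rightarrow> real) set" where
  "cyl a k l S = {\<omega> \<in> space Omega. code l a k \<omega> \<in> S}"

lemma seg_length[simp]: "length (seg \<omega> a k) = k" by (simp add: seg_def)
lemma seg_nth[simp]: "r < k \<Longrightarrow> seg \<omega> a k ! r = \<omega> (a + r)"
  by (simp add: seg_def coord_def)
lemma code_length[simp]: "length (code l a k \<omega>) = k" by (simp add: code_def)
lemma code_nth[simp]: "r < k \<Longrightarrow> code l a k \<omega> ! r = idx l (\<omega> (a + r))"
  by (simp add: code_def)

lemma space_OmegaD: "\<omega> \<in> space Omega \<Longrightarrow> \<omega> i \<in> {0..1}"
  by (simp add: space_Omega)

lemma code_in: "\<omega> \<in> space Omega \<Longrightarrow> code l a k \<omega> \<in> dyadic_cube_indices k l"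
  unfolding dyadic_cube_indices_def by (auto intro!: idx_lt space_OmegaD)

lemma finite_idxset: "finite (dyadic_cube_indices k l)"
proof -
  have "dyadic_cube_indices k l = {xs. set xs \<subseteq> {..<2^l} \<and> length xs = k}"
    unfolding dyadic_cube_indices_def by (auto simp: in_set_conv_nth) (metis lessThan_iff nth_mem subsetD)
  then show ?thesis by (simp add: finite_lists_length_eq)
qed

lemma card_idxset: "card (dyadic_cube_indices k l) = 2^(l*k)"
proof -
  have "dyadic_cube_indices k l = {xs. set xs \<subseteq> {..<2^l} \<and> length xs = k}"
    unfolding dyadic_cube_indices_def by (auto simp: in_set_conv_nth) (metis lessThan_iff nth_mem subsetD)
  then show ?thesis by (simp add: card_lists_length_eq power_mult)
qed

lemma seg_in_cube: assumes "\<omega> \<in> space Omega" "is \<in> dyadic_cube_indices k l"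
  shows "seg \<omega> a k \<in> dyadic_cube l is \<longleftrightarrow> code l a k \<omega> = is"
proof -
  have len: "length is = k" and lt: "\<And>r. r < k \<Longrightarrow> is ! r < 2^l"
    using assms(2) unfolding dyadic_cube_indices_def by auto
  have "seg \<omega> a k \<in> dyadic_cube l is \<longleftrightarrow> (\<forall>r<k. idx l (\<omega> (a + r)) = is ! r)"
    unfolding dyadic_cube_def using len lt idx_iff[OF space_OmegaD[OF assms(1)]] by auto
  also have "\<dots> \<longleftrightarrow> code l a k \<omega> = is"
    using len by (auto simp: list_eq_iff_nth_eq)
  finally show ?thesis .
qed

lemma seg_in_union: assumes "\<omega> \<in> space Omega" "S \<subseteq> dyadic_cube_indices k l"
  shows "seg \<omega> a k \<in> \<Union>(dyadic_cube l ` S) \<longleftrightarrow> code l a k \<omega> \<in> S"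
proof
  assume "seg \<omega> a k \<in> \<Union>(dyadic_cube l ` S)"
  then obtain c where "c \<in> S" "seg \<omega> a k \<in> dyadic_cube l c" by auto
  then show "code l a k \<omega> \<in> S" using seg_in_cube[OF assms(1)] assms(2) by auto
next
  assume "code l a k \<omega> \<in> S"
  moreover have "seg \<omega> a k \<in> dyadic_cube l (code l a k \<omega>)"
    using seg_in_cube[OF assms(1) code_in[OF assms(1)]] by simp
  ultimately show "seg \<omega> a k \<in> \<Union>(dyadic_cube l ` S)" by auto
qed

lemma indicator_union_cyl: assumes "\<omega> \<in> space Omega" "S \<subseteq> dyadic_cube_indices k l"
  shows "indicator (\<Union>(dyadic_cube l ` S)) (seg \<omega> a k) = (indicator (cyl a k l S) \<omega> :: real)"
  using seg_in_union[OF assms] assms(1) unfolding cyl_def indicator_def by auto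

lemma code_lift: assumes "\<omega> \<in> space Omega" "k \<le> k'" "l \<le> l'"
  shows "code l a k \<omega> = map (\<lambda>i. i div 2^(l'-l)) (take k (code l' a k' \<omega>))"
  using assms by (auto simp: list_eq_iff_nth_eq idx_refine[OF space_OmegaD[OF assms(1)]])

definition lift_set :: "nat \<Rightarrow> nat \<Rightarrow> nat \<Rightarrow> nat \<Rightarrow> nat list set \<Rightarrow> nat list set" where
  "lift_set k l k' l' S = {c \<in> dyadic_cube_indices k' l'. map (\<lambda>i. i div 2^(l'-l)) (take k c) \<in> S}"

lemma lift_set_sub: "lift_set k l k' l' S \<subseteq> dyadic_cube_indices k' l'"
  unfolding lift_set_def by auto

lemma cyl_lift: assumes "k \<le> k'" "l \<le> l'"
  shows "cyl a k l S = cyl a k' l' (lift_set k l k' l' S)"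
  unfolding cyl_def lift_set_def using code_lift[OF _ assms] code_in by auto

lemma cyl_compl: "space Omega - cyl a k l S = cyl a k l (dyadic_cube_indices k l - S)"
  unfolding cyl_def using code_in by auto

lemma cyl_Un: "cyl a k l S \<union> cyl a k l S' = cyl a k l (S \<union> S')"
  unfolding cyl_def by auto

lemma cyl_space: "cyl a k l S \<subseteq> space Omega" unfolding cyl_def by auto

lemma gen_sigma_gen_sub: "(\<Union>t\<in>T. {coord t -` B \<inter> space Omega | B. B \<in> sets (borel :: real measure)}) \<subseteq> Pow (space Omega)"
  by auto

lemma sa_gen_sigma: "sigma_algebra (space Omega) (gen_sigma T)"
  unfolding gen_sigma_def by (rule sigma_algebra_sigma_sets[OF gen_sigma_gen_sub])

lemma gen_sigma_mono: "T \<subseteq> T' \<Longrightarrow> gen_sigma T \<subseteq> gen_sigma T'"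
  unfolding gen_sigma_def by (rule sigma_sets_mono') blast

lemma coord_measurable[measurable]: "coord t \<in> borel_measurable Omega"
proof -
  have "(\<lambda>\<omega>. \<omega> (t - 1)) \<in> measurable Omega (restrict_space borel {0..1::real})"
    unfolding Omega_def by (rule measurable_component_singleton) simp
  then have "(\<lambda>\<omega>. \<omega> (t - 1)) \<in> borel_measurable Omega"
    using measurable_restrict_space2_iff by blast
  then show ?thesis unfolding coord_def[abs_def] .
qed

lemma gen_sigma_sets: "gen_sigma T \<subseteq> sets Omega"
  unfolding gen_sigma_def
  by (rule sets.sigma_sets_subset) (auto intro!: measurable_sets[OF coord_measurable])

lemma gen_sigma_generator: "t \<in> T \<Longrightarrow> B \<in> sets borel \<Longrightarrow> coord t -` B \<inter> space Omega \<in> gen_sigma T"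
  unfolding gen_sigma_def by (rule sigma_sets.Basic) blast

lemma cyl_gen_sigma: "cyl a k l S \<in> gen_sigma {a+1..a+k}"
proof -
  interpret sa: sigma_algebra "space Omega" "gen_sigma {a+1..a+k}" by (rule sa_gen_sigma)
  define G where "G c = (if k = 0 then space Omega else 
     (\<Inter>r\<in>{..<k}. coord (a+r+1) -` {x. idx l x = c ! r} \<inter> space Omega))" for c
  have G: "G c \<in> gen_sigma {a+1..a+k}" for c
  proof (cases "k = 0")
    case True then show ?thesis unfolding G_def using sa.top by simp
  next
    case False
    then have "G c = (\<Inter>r\<in>{..<k}. coord (a+r+1) -` {x. idx l x = c ! r} \<inter> space Omega)"
      unfolding G_def by simp
    also have "\<dots> \<in> gen_sigma {a+1..a+k}"
      using False by (intro sa.finite_INT ballI gen_sigma_generator idx_eq_sets) auto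
    finally show ?thesis .
  qed
  have "cyl a k l S = (\<Union>c\<in>S \<inter> dyadic_cube_indices k l. G c)"
  proof -
    have "\<omega> \<in> G c \<longleftrightarrow> \<omega> \<in> space Omega \<and> code l a k \<omega> = c" if "c \<in> dyadic_cube_indices k l" for \<omega> c
    proof (cases "k = 0")
      case True then show ?thesis using that unfolding G_def dyadic_cube_indices_def by (auto simp: code_def)
    next
      case False
      have "\<omega> \<in> G c \<longleftrightarrow> \<omega> \<in> space Omega \<and> (\<forall>r<k. idx l (\<omega> (a + r)) = c ! r)"
        using False unfolding G_def by (auto simp: coord_def)
      also have "\<dots> \<longleftrightarrow> \<omega> \<in> space Omega \<and> code l a k \<omega> = c"
        using that unfolding dyadic_cube_indices_def by (auto simp: list_eq_iff_nth_eq)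
      finally show ?thesis .
    qed
    then show ?thesis unfolding cyl_def using code_in by auto
  qed
  also have "\<dots> \<in> gen_sigma {a+1..a+k}"
    using finite_idxset G by (intro sa.finite_UN) auto
  finally show ?thesis .
qed

lemma cyl_sets: "cyl a k l S \<in> sets Omega"
  using cyl_gen_sigma gen_sigma_sets by blast


definition shiftN :: "nat \<Rightarrow> (nat \<Rightarrow> real) \<Rightarrow> (nat \<Rightarrow> real)" where
  "shiftN a \<omega> = (\<lambda>i. \<omega> (i + a))"

lemma shiftN_space: "\<omega> \<in> space Omega \<Longrightarrow> shiftN a \<omega> \<in> space Omega"
  by (simp add: space_Omega shiftN_def)

lemma shiftN_meas: "shiftN a \<in> measurable Omega Omega"
proof -
  have "(\<lambda>\<omega> i. \<omega> (i + a)) \<in> measurable Omega Omega"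
    unfolding Omega_def
    by (rule measurable_PiM_single') (auto simp: space_PiM)
  then show ?thesis unfolding shiftN_def[abs_def] .
qed

lemma shiftN_comp: "shiftN 1 \<circ> shiftN a = shiftN (Suc a)"
  by (auto simp: shiftN_def fun_eq_iff)

lemma code_shift: "code l (a + b) k \<omega> = code l b k (shiftN a \<omega>)"
  by (simp add: code_def shiftN_def ac_simps)

lemma cyl_shift: "cyl (a + b) k l S = shiftN a -` cyl b k l S \<inter> space Omega"
  unfolding cyl_def using shiftN_space code_shift by auto

locale proc =
  fixes \<mu> :: "(nat \<Rightarrow> real) measure"
  assumes muC: "\<mu> \<in> class_C"
begin

lemma prob: "prob_space \<mu>" and sets_mu: "sets \<mu> = sets Omega" and stat: "stationary \<mu>"
  and summ: "summable (\<lambda>m. alpha_coef \<mu> (Suc m))"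
  using muC unfolding class_C_def process_distribution_def by auto

sublocale prob_space \<mu> by (rule prob)

lemma space_mu: "space \<mu> = space Omega" using sets_mu by (rule sets_eq_imp_space_eq)

lemma meas_mu: "measurable \<mu> N = measurable Omega N"
  by (rule measurable_cong_sets[OF sets_mu refl])

lemma distr_shift: "distr \<mu> Omega (shiftN a) = \<mu>"
proof (induction a)
  case 0
  have "shiftN 0 = (\<lambda>x. x)" by (simp add: shiftN_def fun_eq_iff)
  then have "distr \<mu> Omega (shiftN 0) = distr \<mu> Omega (\<lambda>x. x)" by simp
  also have "\<dots> = distr \<mu> \<mu> (\<lambda>x. x)" by (rule distr_cong) (simp_all add: sets_mu)
  also have "\<dots> = \<mu>" by simp
  finally show ?case .
next
  case (Suc a)
  have "distr \<mu> Omega (shiftN (Suc a)) = distr \<mu> Omega (shiftN 1 \<circ> shiftN a)"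
    by (simp only: shiftN_comp)
  also have "\<dots> = distr (distr \<mu> Omega (shiftN a)) Omega (shiftN 1)"
    by (rule distr_distr[symmetric]) (simp_all add: shiftN_meas meas_mu)
  also have "\<dots> = distr \<mu> Omega (shiftN 1)" using Suc by simp
  also have "shiftN 1 = (\<lambda>\<omega> i. \<omega> (Suc i))" by (simp add: shiftN_def fun_eq_iff)
  also have "distr \<mu> Omega \<dots> = \<mu>" using stat unfolding stationary_def .
  finally show ?case .
qed

lemma measure_shift: assumes "E \<in> sets Omega"
  shows "measure \<mu> (shiftN a -` E \<inter> space Omega) = measure \<mu> E"
proof -
  have "measure \<mu> E = measure (distr \<mu> Omega (shiftN a)) E" by (simp add: distr_shift)
  also have "\<dots> = measure \<mu> (shiftN a -` E \<inter> space \<mu>)"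
    by (rule measure_distr) (simp_all add: shiftN_meas meas_mu assms)
  finally show ?thesis by (simp add: space_mu)
qed

lemma measure_cyl_shift: "measure \<mu> (cyl a k l S) = measure \<mu> (cyl 0 k l S)"
  using measure_shift[OF cyl_sets, of a 0 k l S] cyl_shift[of a 0 k l S] by simp

lemma gen_sigma_sets_mu: "gen_sigma T \<subseteq> sets \<mu>"
  using gen_sigma_sets sets_mu by simp

definition covf :: "(nat \<Rightarrow> real) set \<times> (nat \<Rightarrow> real) set \<Rightarrow> real" where
  "covf p = \<bar>measure \<mu> (fst p \<inter> snd p) - measure \<mu> (fst p) * measure \<mu> (snd p)\<bar>"

lemma covf_le1: "covf p \<le> 1"
proof -
  have "0 \<le> measure \<mu> (fst p \<inter> snd p)" "measure \<mu> (fst p \<inter> snd p) \<le> 1"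
    "0 \<le> measure \<mu> (fst p) * measure \<mu> (snd p)" "measure \<mu> (fst p) * measure \<mu> (snd p) \<le> 1"
    by (auto intro!: mult_le_one)
  then show ?thesis unfolding covf_def by linarith
qed

lemma alpha_eq: "alpha_coef \<mu> m = (\<Squnion>j\<in>{1..}. \<Squnion>p\<in>gen_sigma {1..j} \<times> gen_sigma {j+m..}. covf p)"
  unfolding alpha_coef_def covf_def ..

lemma gen_sigma_empty: "{} \<in> gen_sigma T"
  unfolding gen_sigma_def by (rule sigma_sets.Empty)

lemma inner_ne: "gen_sigma {1..j} \<times> gen_sigma {j+m..} \<noteq> {}"
  using gen_sigma_empty by blast

lemma inner_bdd: "bdd_above (covf ` X)"
  using covf_le1 by (auto intro!: bdd_aboveI)

lemma inner_le1: "(\<Squnion>p\<in>gen_sigma {1..j} \<times> gen_sigma {j+m..}. covf p) \<le> 1"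
  by (rule cSUP_least[OF inner_ne covf_le1])

lemma outer_bdd: "bdd_above ((\<lambda>j. \<Squnion>p\<in>gen_sigma {1..j} \<times> gen_sigma {j+m..}. covf p) ` X)"
  using inner_le1 by (auto intro!: bdd_aboveI)

lemma alpha_bound: assumes "j \<ge> 1" "A \<in> gen_sigma {1..j}" "B \<in> gen_sigma {j+m..}"
  shows "\<bar>measure \<mu> (A \<inter> B) - measure \<mu> A * measure \<mu> B\<bar> \<le> alpha_coef \<mu> m"
proof -
  have "covf (A, B) \<le> (\<Squnion>p\<in>gen_sigma {1..j} \<times> gen_sigma {j+m..}. covf p)"
    by (rule cSUP_upper2[OF inner_bdd]) (use assms in auto)
  also have "\<dots> \<le> alpha_coef \<mu> m" unfolding alpha_eq
    by (rule cSUP_upper2[OF outer_bdd]) (use assms in auto)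
  finally show ?thesis unfolding covf_def by simp
qed

lemma alpha_nonneg: "0 \<le> alpha_coef \<mu> m"
  using alpha_bound[of 1 "{}" "{}" m] gen_sigma_empty by simp

lemma alpha_antimono: assumes "m \<le> m'" shows "alpha_coef \<mu> m' \<le> alpha_coef \<mu> m"
  unfolding alpha_eq
proof (rule cSUP_mono)
  show "{1::nat..} \<noteq> {}" by auto
  show "bdd_above ((\<lambda>j. \<Squnion>p\<in>gen_sigma {1..j} \<times> gen_sigma {j+m..}. covf p) ` {1..})" by (rule outer_bdd)
  fix j :: nat assume "j \<in> {1..}"
  have "(\<Squnion>p\<in>gen_sigma {1..j} \<times> gen_sigma {j+m'..}. covf p) \<le> (\<Squnion>p\<in>gen_sigma {1..j} \<times> gen_sigma {j+m..}. covf p)"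
  proof (rule cSUP_subset_mono[OF inner_ne inner_bdd])
    show "gen_sigma {1..j} \<times> gen_sigma {j+m'..} \<subseteq> gen_sigma {1..j} \<times> gen_sigma {j+m..}"
      using gen_sigma_mono[of "{j+m'..}" "{j+m..}"] assms by auto
  qed simp
  then show "\<exists>j'\<in>{1..}. (\<Squnion>p\<in>gen_sigma {1..j} \<times> gen_sigma {j+m'..}. covf p) \<le> (\<Squnion>p\<in>gen_sigma {1..j'} \<times> gen_sigma {j'+m..}. covf p)"
    using \<open>j \<in> {1..}\<close> by blast
qed

definition Asum where "Asum = (\<Sum>m. alpha_coef \<mu> (Suc m))"

lemma Asum_nonneg: "0 \<le> Asum"
  unfolding Asum_def using summ alpha_nonneg by (intro suminf_nonneg) auto

lemma alpha_partial: "(\<Sum>d\<in>{1..N}. alpha_coef \<mu> d) \<le> Asum"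
proof -
  have "(\<Sum>d\<in>{1..N}. alpha_coef \<mu> d) = (\<Sum>d<N. alpha_coef \<mu> (Suc d))"
    by (induction N) auto
  also have "\<dots> \<le> Asum" unfolding Asum_def
    using summ alpha_nonneg by (intro sum_le_suminf) auto
  finally show ?thesis .
qed

end

lemma sum_dist_bound:
  fixes h :: "nat \<Rightarrow> real"
  assumes h: "\<And>d. 0 \<le> h d" and i: "i < t"
  shows "(\<Sum>i'\<in>{..<t} - {i}. h (if i' < i then i - i' else i' - i)) \<le> 2 * (\<Sum>d\<in>{1..t}. h d)"
proof -
  have split: "{..<t} - {i} = {..<i} \<union> {i<..<t}" using i by auto
  have "(\<Sum>i'\<in>{..<t} - {i}. h (if i' < i then i - i' else i' - i))
      = (\<Sum>i'\<in>{..<i}. h (i - i')) + (\<Sum>i'\<in>{i<..<t}. h (i' - i))"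
    unfolding split by (subst sum.union_disjoint) (auto intro!: sum.cong)
  also have "(\<Sum>i'\<in>{..<i}. h (i - i')) = (\<Sum>d\<in>(\<lambda>i'. i - i') ` {..<i}. h d)"
    by (subst sum.reindex) (auto simp: inj_on_def)
  also have "\<dots> \<le> (\<Sum>d\<in>{1..t}. h d)"
    using i by (intro sum_mono2) (auto simp: h)
  also have "(\<Sum>i'\<in>{i<..<t}. h (i' - i)) = (\<Sum>d\<in>(\<lambda>i'. i' - i) ` {i<..<t}. h d)"
    by (subst sum.reindex) (auto simp: inj_on_def)
  also have "\<dots> \<le> (\<Sum>d\<in>{1..t}. h d)"
    by (intro sum_mono2) (auto simp: h)
  finally show ?thesis by simp
qed

context proc
begin

lemma dev_bound:
  fixes G :: "nat \<Rightarrow> (nat \<Rightarrow> real) set" and s k t :: nat and p c :: real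
  assumes k: "1 \<le> k" "k \<le> s" and G: "\<And>a. G a \<in> gen_sigma {a+1..a+k}"
    and Gp: "\<And>a. measure \<mu> (G a) = p" and t: "0 < t" and c: "0 < c"
  shows "measure \<mu> {\<omega>\<in>space \<mu>. c \<le> \<bar>(\<Sum>i<t. indicator (G (i * s)) \<omega>) / real t - p\<bar>}
          \<le> (1 + 2*Asum) / (real t * c\<^sup>2)"
proof -
  define I where "I i = (indicator (G (i * s)) :: (nat \<Rightarrow> real) \<Rightarrow> real)" for i
  have Gs[measurable]: "G a \<in> sets \<mu>" for a using G gen_sigma_sets_mu by blast
  have Gsp: "G a \<inter> space \<mu> = G a" for a using Gs sets.Int_space_eq2 by blast
  have Imeas[measurable]: "I i \<in> borel_measurable \<mu>" for i unfolding I_def by measurable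
  have Iint: "integrable \<mu> (I i)" for i unfolding I_def by (rule integrable_real_indicator) (auto simp: less_top[symmetric])
  have EI: "expectation (I i) = p" for i unfolding I_def using Gp Gsp by simp
  define f where "f \<omega> = (\<Sum>i<t. I i \<omega>) / real t" for \<omega>
  have fmeas[measurable]: "f \<in> borel_measurable \<mu>" unfolding f_def by measurable
  have Ef: "expectation f = p"
  proof -
    have "expectation f = (\<Sum>i<t. expectation (I i)) / real t"
      unfolding f_def using Iint by simp
    also have "\<dots> = p" using EI t by simp
    finally show ?thesis .
  qed
  have I01: "0 \<le> I i \<omega> \<and> I i \<omega> \<le> 1" for i \<omega> unfolding I_def by (auto split: split_indicator)
  have f01: "0 \<le> f \<omega> \<and> f \<omega> \<le> 1" for \<omega>
  proof -
    have "(\<Sum>i<t. I i \<omega>) \<le> (\<Sum>i<t. 1)" using I01 by (intro sum_mono) auto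
    moreover have "0 \<le> (\<Sum>i<t. I i \<omega>)" using I01 by (intro sum_nonneg) auto
    ultimately show ?thesis unfolding f_def using t by (auto simp: divide_le_eq)
  qed
  have int2: "integrable \<mu> (\<lambda>x. f x ^ 2)"
    by (rule integrable_const_bound[where B=1]) (use f01 in \<open>auto intro!: power_le_one simp: abs_le_iff\<close>)
  have cheb: "prob {x\<in>space \<mu>. c \<le> \<bar>f x - p\<bar>} \<le> variance f / c\<^sup>2"
    using Chebyshev_inequality[OF fmeas int2 c] unfolding Ef .
  have covI: "expectation (\<lambda>\<omega>. (I i \<omega> - p) * (I i' \<omega> - p)) = measure \<mu> (G (i * s) \<inter> G (i' * s)) - p\<^sup>2" for i i'
  proof -
    have eq: "(\<lambda>\<omega>. (I i \<omega> - p) * (I i' \<omega> - p)) = (\<lambda>\<omega>. indicator (G (i * s) \<inter> G (i' * s)) \<omega> - p * I i \<omega> - p * I i' \<omega> + p\<^sup>2)"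
      unfolding I_def by (simp add: fun_eq_iff indicator_inter_arith power2_eq_square algebra_simps)
    have ii: "integrable \<mu> (indicator (G (i * s) \<inter> G (i' * s)) :: _ \<Rightarrow> real)" by (rule integrable_real_indicator) (auto simp: less_top[symmetric])
    have "expectation (\<lambda>\<omega>. indicator (G (i * s) \<inter> G (i' * s)) \<omega> - p * I i \<omega> - p * I i' \<omega> + p\<^sup>2)
        = measure \<mu> (G (i * s) \<inter> G (i' * s)) - p * p - p * p + p\<^sup>2"
      using ii Iint EI Gsp by (simp add: Int_assoc[symmetric] Gsp prob_space)
    then show ?thesis unfolding eq by (simp add: power2_eq_square)
  qed
  have cov_le: "measure \<mu> (G (i * s) \<inter> G (i' * s)) - p\<^sup>2 \<le> alpha_coef \<mu> (i' - i)" if "i < i'" for i i'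
  proof -
    define j where "j = i * s + k"
    define g where "g = i' * s + 1 - j"
    define d where "d = i' - i - 1"
    have i': "i' = i + d + 1" using that unfolding d_def by simp
    have e1: "i' * s = i * s + d * s + s" unfolding i' by (simp add: algebra_simps)
    have e2: "d \<le> d * s" using k by simp
    have jg: "j + g = i' * s + 1" unfolding j_def g_def using e1 k by simp
    have e3: "d * s + s \<ge> d + k" using e2 k by linarith
    have gge: "g \<ge> i' - i" unfolding j_def g_def using e1 e3 i' by linarith
    have "G (i * s) \<in> gen_sigma {1..j}" using G[of "i * s"] gen_sigma_mono[of "{i * s + 1..i * s + k}" "{1..j}"]
      unfolding j_def by auto
    moreover have "G (i' * s) \<in> gen_sigma {j+g..}" using G[of "i' * s"] gen_sigma_mono[of "{i' * s + 1..i' * s + k}" "{j+g..}"]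
      unfolding jg by auto
    moreover have "j \<ge> 1" using k unfolding j_def by simp
    ultimately have "\<bar>measure \<mu> (G (i * s) \<inter> G (i' * s)) - measure \<mu> (G (i * s)) * measure \<mu> (G (i' * s))\<bar> \<le> alpha_coef \<mu> g"
      by (intro alpha_bound)
    also have "\<dots> \<le> alpha_coef \<mu> (i' - i)" by (rule alpha_antimono[OF gge])
    finally show ?thesis using Gp by (simp add: power2_eq_square)
  qed
  define b where "b i i' = (if i = i' then 1 else alpha_coef \<mu> (if i' < i then i - i' else i' - i))" for i i'
  have cov_b: "measure \<mu> (G (i * s) \<inter> G (i' * s)) - p\<^sup>2 \<le> b i i'" for i i'
  proof (cases "i = i'")
    case True
    have "measure \<mu> (G (i * s) \<inter> G (i' * s)) \<le> 1" by simp
    then show ?thesis using True unfolding b_def by (smt (verit) zero_le_power2)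
  next
    case False
    then show ?thesis
    proof (cases "i < i'")
      case True then show ?thesis using cov_le[OF True] False unfolding b_def by auto
    next
      case F2: False
      then have "i' < i" using False by simp
      then show ?thesis using cov_le[of i' i] False F2 unfolding b_def by (simp add: Int_commute)
    qed
  qed
  have rowb: "(\<Sum>i'<t. b i i') \<le> 1 + 2*Asum" if "i < t" for i
  proof -
    have "(\<Sum>i'<t. b i i') = b i i + (\<Sum>i'\<in>{..<t}-{i}. b i i')"
      using that by (subst sum.remove[of _ i]) auto
    also have "(\<Sum>i'\<in>{..<t}-{i}. b i i') = (\<Sum>i'\<in>{..<t}-{i}. alpha_coef \<mu> (if i' < i then i - i' else i' - i))"
      unfolding b_def by (intro sum.cong) auto
    also have "\<dots> \<le> 2 * (\<Sum>d\<in>{1..t}. alpha_coef \<mu> d)"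
      by (rule sum_dist_bound[OF alpha_nonneg that])
    also have "\<dots> \<le> 2 * Asum" using alpha_partial by simp
    finally show ?thesis unfolding b_def by simp
  qed
  have var: "variance f \<le> (1 + 2*Asum) / real t"
  proof -
    have eq: "(\<lambda>\<omega>. (f \<omega> - p)\<^sup>2) = (\<lambda>\<omega>. (\<Sum>i<t. \<Sum>i'<t. (I i \<omega> - p) * (I i' \<omega> - p)) / (real t)\<^sup>2)"
    proof
      fix \<omega>
      have "f \<omega> - p = (\<Sum>i<t. I i \<omega> - p) / real t"
        unfolding f_def using t by (simp add: sum_subtractf field_simps)
      then show "(f \<omega> - p)\<^sup>2 = (\<Sum>i<t. \<Sum>i'<t. (I i \<omega> - p) * (I i' \<omega> - p)) / (real t)\<^sup>2"
        by (simp add: power2_eq_square sum_product power_divide)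
    qed
    have intp: "integrable \<mu> (\<lambda>\<omega>. (I i \<omega> - p) * (I i' \<omega> - p))" for i i'
    proof (rule integrable_const_bound[where B=1])
      have p01: "0 \<le> p" "p \<le> 1" using Gp[of 0] by auto
      have "\<bar>I i \<omega> - p\<bar> \<le> 1" "\<bar>I i' \<omega> - p\<bar> \<le> 1" for \<omega> using I01[of i \<omega>] I01[of i' \<omega>] p01 by auto
      then show "AE x in \<mu>. norm ((I i x - p) * (I i' x - p)) \<le> 1"
        by (auto simp: abs_mult intro!: mult_le_one)
    qed measurable
    have V: "variance f = expectation (\<lambda>\<omega>. (\<Sum>i<t. \<Sum>i'<t. (I i \<omega> - p) * (I i' \<omega> - p))) / (real t)\<^sup>2"
      unfolding Ef eq by simp
    have "expectation (\<lambda>\<omega>. (\<Sum>i<t. \<Sum>i'<t. (I i \<omega> - p) * (I i' \<omega> - p))) 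
        = (\<Sum>i<t. \<Sum>i'<t. measure \<mu> (G (i * s) \<inter> G (i' * s)) - p\<^sup>2)"
      using intp by (simp add: covI)
    also have "\<dots> \<le> (\<Sum>i<t. \<Sum>i'<t. b i i')"
      using cov_b by (intro sum_mono) auto
    also have "\<dots> \<le> (\<Sum>i<t. 1 + 2*Asum)"
      using rowb by (intro sum_mono) auto
    finally have E: "expectation (\<lambda>\<omega>. (\<Sum>i<t. \<Sum>i'<t. (I i \<omega> - p) * (I i' \<omega> - p))) \<le> (\<Sum>i<t. 1 + 2*Asum)" .
    have *: "variance f \<le> (\<Sum>i<t. 1 + 2*Asum) / (real t)\<^sup>2"
      unfolding V by (rule divide_right_mono[OF E]) simp
    have "(\<Sum>i<t. 1 + 2*Asum) / (real t)\<^sup>2 = (1 + 2*Asum) / real t"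
      using t by (simp add: power2_eq_square)
    then show ?thesis using * by linarith
  qed
  have "measure \<mu> {\<omega>\<in>space \<mu>. c \<le> \<bar>(\<Sum>i<t. indicator (G (i * s)) \<omega>) / real t - p\<bar>}
      = prob {x\<in>space \<mu>. c \<le> \<bar>f x - p\<bar>}" unfolding f_def I_def by simp
  also have "\<dots> \<le> variance f / c\<^sup>2" by (rule cheb)
  also have "\<dots> \<le> ((1 + 2*Asum) / real t) / c\<^sup>2"
    using var c by (intro divide_right_mono) auto
  finally show ?thesis by (simp add: field_simps)
qed

end

definition GG :: "nat \<Rightarrow> nat \<Rightarrow> nat \<Rightarrow> nat \<Rightarrow> nat list set \<Rightarrow> nat list set \<Rightarrow> nat \<Rightarrow> (nat \<Rightarrow> real) set" where
  "GG n l m j SA SB a = cyl a j l SA \<inter> cyl (a + j + m - 1) (n - m - j + 1) l SB"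

lemma GG_shift: assumes "1 \<le> m" shows "GG n l m j SA SB (a + b) = shiftN a -` GG n l m j SA SB b \<inter> space Omega"
proof -
  have e: "a + b + j + m - 1 = a + (b + j + m - 1)" using assms by simp
  show ?thesis unfolding GG_def e using cyl_shift[of a b] cyl_shift[of a "b + j + m - 1"] by auto
qed

lemma GG_gen: assumes "1 \<le> m" "m < n" "1 \<le> j" "j \<le> n - m"
  shows "GG n l m j SA SB a \<in> gen_sigma {a+1..a+n}"
proof -
  interpret sa: sigma_algebra "space Omega" "gen_sigma {a+1..a+n}" by (rule sa_gen_sigma)
  have "j \<le> n" using assms by simp
  then have "cyl a j l SA \<in> gen_sigma {a+1..a+n}"
    using cyl_gen_sigma[of a j l SA] gen_sigma_mono[of "{a+1..a+j}" "{a+1..a+n}"] by auto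
  moreover have "cyl (a + j + m - 1) (n - m - j + 1) l SB \<in> gen_sigma {a+1..a+n}"
    using cyl_gen_sigma[of "a + j + m - 1" "n - m - j + 1" l SB]
      gen_sigma_mono[of "{a + j + m - 1 + 1..a + j + m - 1 + (n - m - j + 1)}" "{a+1..a+n}"] assms by auto
  ultimately show ?thesis unfolding GG_def by (rule sa.Int)
qed

lemma mu_emp_cyl: assumes "\<omega> \<in> space Omega" "S \<subseteq> dyadic_cube_indices k l"
  shows "mu_emp \<omega> k t (\<Union>(dyadic_cube l ` S)) = (\<Sum>i<t. indicator (cyl (i * k) k l S) \<omega>) / real t"
  unfolding mu_emp_def using indicator_union_cyl[OF assms] by simp

lemma gam_emp_GG: assumes "\<omega> \<in> space Omega" "SA \<subseteq> dyadic_cube_indices j l"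
  "SB \<subseteq> dyadic_cube_indices (n - m - j + 1) l"
  shows "gam_emp \<omega> t n m j (\<Union>(dyadic_cube l ` SA)) (\<Union>(dyadic_cube l ` SB))
       = (\<Sum>i<t. indicator (GG n l m j SA SB (i * n)) \<omega>) / real t"
  unfolding gam_emp_def GG_def using indicator_union_cyl[OF assms(1,2)] indicator_union_cyl[OF assms(1,3)]
  by (simp add: indicator_inter_arith)

lemma three: "(x::real) \<le> K + K + K \<Longrightarrow> x \<le> 3 * K" by simp

context proc
begin

lemma measure_GG_shift: assumes "1 \<le> m" shows "measure \<mu> (GG n l m j SA SB a) = measure \<mu> (GG n l m j SA SB 0)"
proof -
  have "GG n l m j SA SB 0 \<in> sets Omega"
    unfolding GG_def using cyl_sets by auto
  then show ?thesis using measure_shift[of "GG n l m j SA SB 0" a] GG_shift[OF assms, of n l j SA SB a 0] by simp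
qed

lemma GG_alpha: assumes "1 \<le> m" "m < n" "1 \<le> j" "j \<le> n - m"
  shows "\<bar>measure \<mu> (GG n l m j SA SB 0) - measure \<mu> (cyl 0 j l SA) * measure \<mu> (cyl 0 (n - m - j + 1) l SB)\<bar>
     \<le> alpha_coef \<mu> m"
proof -
  have B: "measure \<mu> (cyl 0 (n - m - j + 1) l SB) = measure \<mu> (cyl (j + m - 1) (n - m - j + 1) l SB)"
    by (rule measure_cyl_shift[symmetric])
  have A: "cyl 0 j l SA \<in> gen_sigma {1..j}" using cyl_gen_sigma[of 0 j l SA] by simp
  have "cyl (j + m - 1) (n - m - j + 1) l SB \<in> gen_sigma {j+m..}"
    using cyl_gen_sigma[of "j + m - 1" "n - m - j + 1" l SB]
      gen_sigma_mono[of "{j + m - 1 + 1..j + m - 1 + (n - m - j + 1)}" "{j+m..}"] assms by auto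
  then show ?thesis using alpha_bound[OF assms(3) A] unfolding GG_def B by simp
qed

definition devset :: "nat \<Rightarrow> nat \<Rightarrow> nat \<Rightarrow> nat \<Rightarrow> nat list set \<Rightarrow> nat list set \<Rightarrow> nat \<Rightarrow> real \<Rightarrow> (nat \<Rightarrow> real) set" where
  "devset n l m j SA SB tt c =
     {\<omega>\<in>space \<mu>. c \<le> \<bar>(\<Sum>i<tt. indicator (cyl (i * j) j l SA) \<omega>) / real tt - measure \<mu> (cyl 0 j l SA)\<bar>} \<union>
     {\<omega>\<in>space \<mu>. c \<le> \<bar>(\<Sum>i<tt. indicator (cyl (i * (n - m - j + 1)) (n - m - j + 1) l SB) \<omega>) / real tt
          - measure \<mu> (cyl 0 (n - m - j + 1) l SB)\<bar>} \<union>
     {\<omega>\<in>space \<mu>. c \<le> \<bar>(\<Sum>i<tt. indicator (GG n l m j SA SB (i * n)) \<omega>) / real tt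
          - measure \<mu> (GG n l m j SA SB 0)\<bar>}"

lemma cyl_sets_mu[measurable]: "cyl a k l S \<in> sets \<mu>"
  using cyl_sets sets_mu by simp

lemma GG_sets_mu[measurable]: "GG n l m j SA SB a \<in> sets \<mu>"
  unfolding GG_def by simp

lemma devset_sets: "devset n l m j SA SB tt c \<in> sets \<mu>"
  unfolding devset_def by measurable

lemma devset_measure: assumes "1 \<le> m" "m < n" "1 \<le> j" "j \<le> n - m" "0 < tt" "0 < c"
  shows "measure \<mu> (devset n l m j SA SB tt c) \<le> 3 * ((1 + 2*Asum) / (real tt * c\<^sup>2))"
proof -
  let ?j' = "n - m - j + 1"
  have a: "measure \<mu> {\<omega>\<in>space \<mu>. c \<le> \<bar>(\<Sum>i<tt. indicator (cyl (i * j) j l SA) \<omega>) / real tt - measure \<mu> (cyl 0 j l SA)\<bar>}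
     \<le> (1 + 2*Asum) / (real tt * c\<^sup>2)"
    by (rule dev_bound[where k=j], use assms in simp, simp, rule cyl_gen_sigma, rule measure_cyl_shift, (use assms in simp)+)
  have b: "measure \<mu> {\<omega>\<in>space \<mu>. c \<le> \<bar>(\<Sum>i<tt. indicator (cyl (i * ?j') ?j' l SB) \<omega>) / real tt - measure \<mu> (cyl 0 ?j' l SB)\<bar>}
     \<le> (1 + 2*Asum) / (real tt * c\<^sup>2)"
    by (rule dev_bound[where k="?j'"], simp, simp, rule cyl_gen_sigma, rule measure_cyl_shift, (use assms in simp)+)
  have g: "measure \<mu> {\<omega>\<in>space \<mu>. c \<le> \<bar>(\<Sum>i<tt. indicator (GG n l m j SA SB (i * n)) \<omega>) / real tt - measure \<mu> (GG n l m j SA SB 0)\<bar>}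
     \<le> (1 + 2*Asum) / (real tt * c\<^sup>2)"
    by (rule dev_bound[where k=n]) (use assms in \<open>auto intro: GG_gen[simplified] measure_GG_shift\<close>)
  have "measure \<mu> (devset n l m j SA SB tt c) \<le> 
     measure \<mu> {\<omega>\<in>space \<mu>. c \<le> \<bar>(\<Sum>i<tt. indicator (cyl (i * j) j l SA) \<omega>) / real tt - measure \<mu> (cyl 0 j l SA)\<bar>}
     + measure \<mu> {\<omega>\<in>space \<mu>. c \<le> \<bar>(\<Sum>i<tt. indicator (cyl (i * ?j') ?j' l SB) \<omega>) / real tt - measure \<mu> (cyl 0 ?j' l SB)\<bar>}
     + measure \<mu> {\<omega>\<in>space \<mu>. c \<le> \<bar>(\<Sum>i<tt. indicator (GG n l m j SA SB (i * n)) \<omega>) / real tt - measure \<mu> (GG n l m j SA SB 0)\<bar>}"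
    unfolding devset_def
    by (intro order_trans[OF measure_Un_le] add_mono order_refl) measurable
  also have "\<dots> \<le> (1 + 2*Asum) / (real tt * c\<^sup>2) + (1 + 2*Asum) / (real tt * c\<^sup>2) + (1 + 2*Asum) / (real tt * c\<^sup>2)"
    by (intro add_mono a b g)
  finally show ?thesis by (rule three)
qed

lemma not_devset: assumes "\<omega> \<in> space \<mu>" "\<omega> \<notin> devset n l m j SA SB tt c"
  and SA: "SA \<subseteq> dyadic_cube_indices j l" and SB: "SB \<subseteq> dyadic_cube_indices (n - m - j + 1) l"
  shows "\<bar>(gam_emp \<omega> tt n m j (\<Union>(dyadic_cube l ` SA)) (\<Union>(dyadic_cube l ` SB))
           - mu_emp \<omega> j tt (\<Union>(dyadic_cube l ` SA)) * mu_emp \<omega> (n - m - j + 1) tt (\<Union>(dyadic_cube l ` SB)))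
         - (measure \<mu> (GG n l m j SA SB 0) - measure \<mu> (cyl 0 j l SA) * measure \<mu> (cyl 0 (n - m - j + 1) l SB))\<bar>
         < 3 * c"
proof -
  let ?j' = "n - m - j + 1"
  have w: "\<omega> \<in> space Omega" using assms(1) space_mu by simp
  define a where "a = (\<Sum>i<tt. indicator (cyl (i * j) j l SA) \<omega>) / real tt"
  define b where "b = (\<Sum>i<tt. indicator (cyl (i * ?j') ?j' l SB) \<omega>) / real tt"
  define g where "g = (\<Sum>i<tt. indicator (GG n l m j SA SB (i * n)) \<omega>) / real tt"
  define pa where "pa = measure \<mu> (cyl 0 j l SA)"
  define pb where "pb = measure \<mu> (cyl 0 ?j' l SB)"
  define q where "q = measure \<mu> (GG n l m j SA SB 0)"
  have da: "\<bar>a - pa\<bar> < c" and db: "\<bar>b - pb\<bar> < c" and dg: "\<bar>g - q\<bar> < c"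
    using assms(1,2) unfolding devset_def a_def b_def g_def pa_def pb_def q_def by auto
  have b01: "0 \<le> b" "b \<le> 1"
  proof -
    have "(\<Sum>i<tt. indicator (cyl (i * ?j') ?j' l SB) \<omega>) \<le> (\<Sum>i<tt. 1::real)"
      by (intro sum_mono) (auto split: split_indicator)
    moreover have "0 \<le> (\<Sum>i<tt. indicator (cyl (i * ?j') ?j' l SB) \<omega> :: real)"
      by (intro sum_nonneg) auto
    ultimately show "0 \<le> b" "b \<le> 1" unfolding b_def by (auto simp: divide_le_eq)
  qed
  have pa01: "0 \<le> pa" "pa \<le> 1" unfolding pa_def by auto
  have "\<bar>a * b - pa * pb\<bar> = \<bar>(a - pa) * b + pa * (b - pb)\<bar>" by (simp add: algebra_simps)
  also have "\<dots> \<le> \<bar>(a - pa) * b\<bar> + \<bar>pa * (b - pb)\<bar>" by (rule abs_triangle_ineq)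
  also have "\<dots> = \<bar>a - pa\<bar> * b + pa * \<bar>b - pb\<bar>"
    using b01 pa01 by (simp add: abs_mult)
  also have "\<dots> \<le> c * 1 + 1 * c"
    using da db b01 pa01 by (intro add_mono mult_mono) auto
  finally have ab: "\<bar>a * b - pa * pb\<bar> \<le> 2 * c" by simp
  have "gam_emp \<omega> tt n m j (\<Union>(dyadic_cube l ` SA)) (\<Union>(dyadic_cube l ` SB)) = g"
    unfolding g_def by (rule gam_emp_GG[OF w SA SB])
  moreover have "mu_emp \<omega> j tt (\<Union>(dyadic_cube l ` SA)) = a"
    unfolding a_def by (rule mu_emp_cyl[OF w SA])
  moreover have "mu_emp \<omega> ?j' tt (\<Union>(dyadic_cube l ` SB)) = b"
    unfolding b_def by (rule mu_emp_cyl[OF w SB])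
  ultimately show ?thesis using ab dg unfolding q_def[symmetric] pa_def[symmetric] pb_def[symmetric]
    by (simp add: abs_diff_le_iff abs_diff_less_iff abs_le_iff abs_less_iff)
qed

end

lemma n_le_pow: "(n::nat) \<le> 2^(n-1)"
proof (induction n)
  case (Suc n) then show ?case
    by (cases n) (auto simp: )
qed simp

lemma uv: "(u::nat) \<ge> 1 \<Longrightarrow> v \<ge> 1 \<Longrightarrow> u + v \<le> u * v + 1"
proof -
  assume "u \<ge> 1" "v \<ge> 1"
  then obtain a b where "u = Suc a" "v = Suc b" by (metis Suc_le_D One_nat_def)
  then show ?thesis by simp
qed

lemma key_ineq:
  fixes l m n j :: nat
  assumes l: "1 \<le> l" and m: "1 \<le> m" "m < n" and j: "1 \<le> j" "j \<le> n - m"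
  shows "2^(j*l) + 2^((n - m - j + 1)*l) + n + m + 1 \<le> 2^(n*l) + 2^(m*l+1)"
proof -
  define L :: nat where "L = 2^l"
  define j' where "j' = n - m - j + 1"
  have L2: "L \<ge> 2" unfolding L_def using l by (metis one_le_numeral power_increasing power_one_right)
  have j'1: "j' \<ge> 1" unfolding j'_def by simp
  define u :: nat where "u = 2^((j-1)*l)"
  define v :: nat where "v = 2^((j'-1)*l)"
  have u1: "u \<ge> 1" "v \<ge> 1" unfolding u_def v_def by auto
  have xu: "2^(j*l) = L * u" unfolding L_def u_def using j
    by (metis One_nat_def Suc_diff_le diff_Suc_1 mult_Suc power_add)
  have yv: "2^(j'*l) = L * v" unfolding L_def v_def using j'1
    by (metis One_nat_def Suc_diff_le diff_Suc_1 mult_Suc power_add)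
  define P :: nat where "P = 2^((n-1)*l)"
  have uvP: "L * (u * v) \<le> P"
  proof -
    have "L * (u * v) = 2^((1 + (j-1) + (j'-1))*l)" unfolding L_def u_def v_def
      by (simp add: power_add add_mult_distrib)
    also have "\<dots> \<le> P" unfolding P_def 
      using j m j'1 by (intro power_increasing mult_le_mono1) (auto simp: j'_def)
    finally show ?thesis .
  qed
  have s1: "2^(j*l) + 2^(j'*l) \<le> P + L"
  proof -
    have "2^(j*l) + 2^(j'*l) = L * (u + v)" using xu yv by (simp add: algebra_simps)
    also have "\<dots> \<le> L * (u * v + 1)" using mult_le_mono2[OF uv[OF u1], of L] by simp
    also have "\<dots> \<le> P + L" using uvP by (simp add: algebra_simps)
    finally show ?thesis .
  qed
  have nP: "n \<le> P"
  proof -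
    have "n \<le> 2^(n-1)" by (rule n_le_pow)
    also have "(2::nat)^(n-1) \<le> 2^((n-1)*l)" using l by (intro power_increasing) auto
    finally show ?thesis unfolding P_def .
  qed
  have NL: "2^(n*l) = L * P" unfolding L_def P_def using m
    by (metis Suc_diff_1 le_less_trans mult_Suc power_add zero_less_one less_imp_le_nat less_le_trans)
  have s2: "P + n \<le> 2^(n*l)" using NL nP L2
    by (metis add_le_mono le_refl mult_2 mult_le_mono1 order_trans)
  have s3: "L + m + 1 \<le> 2^(m*l+1)"
  proof -
    have a: "L \<le> L^m" using L2 m by (metis One_nat_def power_increasing power_one_right le_trans one_le_numeral L2)
    have b: "m + 1 \<le> 2^m" using less_exp[of m] by (simp add: Suc_le_eq)
    have c: "(2::nat)^m \<le> L^m" using L2 by (simp add: power_mono)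
    have "2^(m*l+1) = 2 * L^m" unfolding L_def by (simp add: power_mult mult.commute)
    then show ?thesis using a b c by linarith
  qed
  show ?thesis using s1 s2 s3 unfolding j'_def[symmetric] by linarith
qed


lemma pow_div_le: assumes "a + b \<le> (E::nat)" shows "(2::real)^a / 2^E \<le> 1 / 2^b"
proof -
  have "(2::real)^a * 2^b \<le> 2^E" using assms by (metis power_add power_increasing one_le_numeral)
  then show ?thesis by (simp add: divide_le_eq field_simps)
qed

lemma geom_le1: "(\<Sum>m\<in>{1..M}. 1 / (2::real)^m) \<le> 1"
proof -
  have "(\<Sum>m\<in>{1..M}. 1 / (2::real)^m) = 1 - 1 / 2^M"
    by (induction M) (auto simp: field_simps)
  then show ?thesis by simp
qed

lemma finite_dyadic_unions: "finite (dyadic_unions k l)"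
proof -
  have "dyadic_unions k l = (\<lambda>S. \<Union>(dyadic_cube l ` S)) ` Pow (dyadic_cube_indices k l)"
    unfolding dyadic_unions_def by auto
  then show ?thesis using finite_idxset by simp
qed

lemma dyadic_unionsI: "S \<subseteq> dyadic_cube_indices k l \<Longrightarrow> \<Union>(dyadic_cube l ` S) \<in> dyadic_unions k l"
  unfolding dyadic_unions_def by auto

lemma dyadic_unionsE: "A \<in> dyadic_unions k l \<Longrightarrow> (\<And>S. S \<subseteq> dyadic_cube_indices k l \<Longrightarrow> A = \<Union>(dyadic_cube l ` S) \<Longrightarrow> P) \<Longrightarrow> P"
  unfolding dyadic_unions_def by auto

definition ahval where
  "ahval \<omega> t n l m j A B = \<bar>gam_emp \<omega> t n m j A B - mu_emp \<omega> j t A * mu_emp \<omega> (n - m - j + 1) t B\<bar>"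

lemma alpha_hat_set: "{\<bar>gam_emp \<omega> t n m j A B - mu_emp \<omega> j t A * mu_emp \<omega> (n - m - j + 1) t B\<bar> | j A B.
            j \<in> {1..n - m} \<and> A \<in> dyadic_unions j l \<and> B \<in> dyadic_unions (n - m - j + 1) l}
   = (\<lambda>(j, A, B). ahval \<omega> t n l m j A B) ` (SIGMA j:{1..n-m}. dyadic_unions j l \<times> dyadic_unions (n - m - j + 1) l)"
  unfolding ahval_def by force

lemma alpha_hat_eq: "alpha_hat \<omega> t n l m = Max ((\<lambda>(j, A, B). ahval \<omega> t n l m j A B) ` (SIGMA j:{1..n-m}. dyadic_unions j l \<times> dyadic_unions (n - m - j + 1) l))"
  unfolding alpha_hat_def alpha_hat_set ..

lemma finite_Sig: "finite (SIGMA j:{1..n-m}. dyadic_unions j l \<times> dyadic_unions (n - m - j + 1) l)"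
  by (intro finite_SigmaI finite_cartesian_product finite_dyadic_unions) auto

lemma alpha_hat_ge: assumes "j \<in> {1..n-m}" "A \<in> dyadic_unions j l" "B \<in> dyadic_unions (n - m - j + 1) l"
  shows "ahval \<omega> t n l m j A B \<le> alpha_hat \<omega> t n l m"
  unfolding alpha_hat_eq using assms by (intro Max_ge finite_imageI finite_Sig) force

lemma alpha_hat_le: assumes "m < n"
  and "\<And>j A B. j \<in> {1..n-m} \<Longrightarrow> A \<in> dyadic_unions j l \<Longrightarrow> B \<in> dyadic_unions (n - m - j + 1) l \<Longrightarrow> ahval \<omega> t n l m j A B \<le> b"
  shows "alpha_hat \<omega> t n l m \<le> b"
proof -
  have "(1, {}, {}) \<in> (SIGMA j:{1..n-m}. dyadic_unions j l \<times> dyadic_unions (n - m - j + 1) l)"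
    using assms(1) dyadic_unionsI[of "{}"] by auto
  then have ne: "(SIGMA j:{1..n-m}. dyadic_unions j l \<times> dyadic_unions (n - m - j + 1) l) \<noteq> {}" by blast
  show ?thesis unfolding alpha_hat_eq using assms(2) ne finite_Sig[of n m l]
    by (subst Max_le_iff) auto
qed


context proc
begin

lemma UN_card_bound:
  assumes "finite I" "\<And>i. i \<in> I \<Longrightarrow> F i \<in> sets \<mu>" "\<And>i. i \<in> I \<Longrightarrow> measure \<mu> (F i) \<le> b"
  shows "measure \<mu> (\<Union>i\<in>I. F i) \<le> real (card I) * b"
proof -
  have "measure \<mu> (\<Union>i\<in>I. F i) \<le> (\<Sum>i\<in>I. measure \<mu> (F i))" by (rule measure_UNION_le) (use assms in auto)
  also have "\<dots> \<le> (\<Sum>i\<in>I. b)" using assms(3) by (rule sum_mono)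
  finally show ?thesis by simp
qed

lemma tau_bound:
  fixes ls ns :: "nat \<Rightarrow> nat" and \<delta>s \<epsilon> :: "nat \<Rightarrow> real"
  assumes "1 \<le> m" "0 < \<delta>s t" "0 < \<epsilon> t"
  shows "0 < tau ls ns \<delta>s \<epsilon> t m"
    "1 / (real (tau ls ns \<delta>s \<epsilon> t m) * (\<epsilon> t)\<^sup>2) \<le> real m * \<delta>s t / real (C_const m (ls t) (ns t))"
proof -
  define C where "C = real (C_const m (ls t) (ns t))"
  have Cpos: "C > 0" unfolding C_def C_const_def using assms by simp
  define x where "x = C / (real m * (\<epsilon> t)\<^sup>2 * \<delta>s t)"
  have xpos: "x > 0" unfolding x_def using Cpos assms by (intro divide_pos_pos mult_pos_pos) auto
  have tau: "tau ls ns \<delta>s \<epsilon> t m = nat \<lceil>x\<rceil>" unfolding tau_def x_def C_def ..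
  have c0: "0 \<le> \<lceil>x\<rceil>" using xpos by simp
  have ge: "real (tau ls ns \<delta>s \<epsilon> t m) \<ge> x" unfolding tau using c0 le_of_int_ceiling[of x]
    by simp
  show "0 < tau ls ns \<delta>s \<epsilon> t m" using ge xpos by linarith
  have "1 / (real (tau ls ns \<delta>s \<epsilon> t m) * (\<epsilon> t)\<^sup>2) \<le> 1 / (x * (\<epsilon> t)\<^sup>2)"
    using ge xpos assms by (intro divide_left_mono mult_right_mono mult_pos_pos) auto
  also have "\<dots> = real m * \<delta>s t / C" unfolding x_def using assms Cpos by (simp add: field_simps)
  finally show "1 / (real (tau ls ns \<delta>s \<epsilon> t m) * (\<epsilon> t)\<^sup>2) \<le> real m * \<delta>s t / real (C_const m (ls t) (ns t))"
    unfolding C_def .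
qed

lemma eventually_good:
  fixes Ms ls ns :: "nat \<Rightarrow> nat" and \<delta>s \<epsilon> :: "nat \<Rightarrow> real"
  assumes ls: "\<And>t. ls t > 0" and ns_Ms: "\<And>t. ns t > Ms t" and dpos: "\<And>t. \<delta>s t > 0"
    and dsum: "summable \<delta>s" and eps: "\<And>t. \<epsilon> t > 0"
  shows "AE \<omega> in \<mu>. eventually (\<lambda>t. \<forall>m\<in>{1..Ms t}. \<forall>j\<in>{1..ns t - m}.
     \<forall>SA \<in> Pow (dyadic_cube_indices j (ls t)). \<forall>SB \<in> Pow (dyadic_cube_indices (ns t - m - j + 1) (ls t)).
       \<omega> \<notin> devset (ns t) (ls t) m j SA SB (tau ls ns \<delta>s \<epsilon> t m) (\<epsilon> t / 3)) sequentially"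
proof -
  define K1 where "K1 = 27 * (1 + 2 * Asum)"
  have K1: "K1 \<ge> 0" unfolding K1_def using Asum_nonneg by simp
  define Bad where "Bad t = (\<Union>m\<in>{1..Ms t}. \<Union>j\<in>{1..ns t - m}.
     \<Union>SA \<in> Pow (dyadic_cube_indices j (ls t)). \<Union>SB \<in> Pow (dyadic_cube_indices (ns t - m - j + 1) (ls t)).
       devset (ns t) (ls t) m j SA SB (tau ls ns \<delta>s \<epsilon> t m) (\<epsilon> t / 3))" for t
  have Bsets: "Bad t \<in> sets \<mu>" for t
    unfolding Bad_def by (intro sets.finite_UN finite_Pow_iff[THEN iffD2] finite_idxset finite_atLeastAtMost devset_sets ballI)
  have Ble: "measure \<mu> (Bad t) \<le> K1 * \<delta>s t" for t
  proof -
    define n where "n = ns t"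
    define l where "l = ls t"
    define M where "M = Ms t"
    define \<delta> where "\<delta> = \<delta>s t"
    have l1: "1 \<le> l" unfolding l_def using ls[of t] by simp
    have \<delta>: "\<delta> > 0" unfolding \<delta>_def by (rule dpos)
    have mj: "measure \<mu> (\<Union>SA \<in> Pow (dyadic_cube_indices j l). \<Union>SB \<in> Pow (dyadic_cube_indices (n - m - j + 1) l).
       devset n l m j SA SB (tau ls ns \<delta>s \<epsilon> t m) (\<epsilon> t / 3)) \<le> K1 * \<delta> / (2^n * 2^m)"
      if m: "m \<in> {1..M}" and j: "j \<in> {1..n - m}" for m j
    proof -
      let ?tt = "tau ls ns \<delta>s \<epsilon> t m"
      have mn: "1 \<le> m" "m < n" using m ns_Ms[of t] unfolding M_def n_def by auto
      have tb: "0 < ?tt" "1 / (real ?tt * (\<epsilon> t)\<^sup>2) \<le> real m * \<delta> / real (C_const m l n)"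
        using tau_bound[where ls=ls and ns=ns and \<delta>s=\<delta>s and \<epsilon>=\<epsilon> and t=t, OF mn(1) dpos[of t] eps[of t]] unfolding l_def n_def \<delta>_def by auto
      define b where "b = K1 * real m * \<delta> / real (C_const m l n)"
      have dev: "measure \<mu> (devset n l m j SA SB ?tt (\<epsilon> t / 3)) \<le> b" for SA SB
      proof -
        have "measure \<mu> (devset n l m j SA SB ?tt (\<epsilon> t / 3)) \<le> 3 * ((1 + 2*Asum) / (real ?tt * (\<epsilon> t / 3)\<^sup>2))"
          using j mn tb eps[of t] by (intro devset_measure) auto
        also have "\<dots> = K1 * (1 / (real ?tt * (\<epsilon> t)\<^sup>2))"
          unfolding K1_def by (simp add: power2_eq_square field_simps)
        also have "\<dots> \<le> K1 * (real m * \<delta> / real (C_const m l n))"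
          using tb K1 by (intro mult_left_mono) auto
        finally show ?thesis unfolding b_def by simp
      qed
      define x :: nat where "x = 2^(l * j)"
      define y :: nat where "y = 2^(l * (n - m - j + 1))"
      define E :: nat where "E = 2^(n * l) + 2^(m * l + 1) + 1"
      have cA: "card (Pow (dyadic_cube_indices j l)) = 2^x"
        unfolding x_def by (simp add: card_Pow finite_idxset card_idxset)
      have cB: "card (Pow (dyadic_cube_indices (n - m - j + 1) l)) = 2^y"
        unfolding y_def by (simp add: card_Pow finite_idxset card_idxset)
      have key: "x + y + (n + m + 1) \<le> E"
        using key_ineq[OF l1 mn, of j] j unfolding x_def y_def E_def by (simp add: mult.commute add.assoc)
      have "measure \<mu> (\<Union>SA \<in> Pow (dyadic_cube_indices j l). \<Union>SB \<in> Pow (dyadic_cube_indices (n - m - j + 1) l).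
         devset n l m j SA SB ?tt (\<epsilon> t / 3)) \<le> real (2^x) * (real (2^y) * b)"
        unfolding cA[symmetric] cB[symmetric]
      proof (rule UN_card_bound)
        fix SA assume "SA \<in> Pow (dyadic_cube_indices j l)"
        show "measure \<mu> (\<Union>SB \<in> Pow (dyadic_cube_indices (n - m - j + 1) l). devset n l m j SA SB ?tt (\<epsilon> t / 3))
           \<le> real (card (Pow (dyadic_cube_indices (n - m - j + 1) l))) * b"
          by (rule UN_card_bound) (auto intro: devset_sets dev simp: finite_idxset)
        show "(\<Union>SB \<in> Pow (dyadic_cube_indices (n - m - j + 1) l). devset n l m j SA SB ?tt (\<epsilon> t / 3)) \<in> sets \<mu>"
          by (intro sets.finite_UN ballI devset_sets) (auto simp: finite_idxset)
      qed (auto simp: finite_idxset)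
      also have "\<dots> = K1 * \<delta> * ((2::real)^(x + y) / 2^E)"
        unfolding b_def C_const_def E_def using mn by (simp add: power_add field_simps)
      also have "\<dots> \<le> K1 * \<delta> * (1 / 2^(n + m + 1))"
        using key K1 \<delta> by (intro mult_left_mono pow_div_le) auto
      also have "\<dots> \<le> K1 * \<delta> / (2^n * 2^m)"
        using K1 \<delta> by (simp add: power_add divide_le_eq field_simps)
      finally show ?thesis .
    qed
    have mb: "measure \<mu> (\<Union>j\<in>{1..n - m}. \<Union>SA \<in> Pow (dyadic_cube_indices j l). \<Union>SB \<in> Pow (dyadic_cube_indices (n - m - j + 1) l).
       devset n l m j SA SB (tau ls ns \<delta>s \<epsilon> t m) (\<epsilon> t / 3)) \<le> K1 * \<delta> / 2^m"
      if m: "m \<in> {1..M}" for m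
    proof -
      have "measure \<mu> (\<Union>j\<in>{1..n - m}. \<Union>SA \<in> Pow (dyadic_cube_indices j l). \<Union>SB \<in> Pow (dyadic_cube_indices (n - m - j + 1) l).
         devset n l m j SA SB (tau ls ns \<delta>s \<epsilon> t m) (\<epsilon> t / 3)) \<le> real (card {1..n-m}) * (K1 * \<delta> / (2^n * 2^m))"
        by (rule UN_card_bound[OF _ _ mj[OF m]]) (auto intro!: sets.finite_UN devset_sets simp: finite_idxset)
      also have "\<dots> \<le> real n * (K1 * \<delta> / (2^n * 2^m))"
        using K1 \<delta> by (intro mult_right_mono) auto
      also have "\<dots> \<le> 2^n * (K1 * \<delta> / (2^n * 2^m))"
      proof -
        have "real n \<le> 2^n" using less_exp[of n] 
          by (metis less_imp_le of_nat_le_iff of_nat_numeral of_nat_power)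
        then show ?thesis using K1 \<delta> by (intro mult_right_mono) auto
      qed
      also have "\<dots> = K1 * \<delta> / 2^m" by simp
      finally show ?thesis .
    qed
    have "measure \<mu> (Bad t) \<le> (\<Sum>m\<in>{1..M}. measure \<mu> (\<Union>j\<in>{1..n - m}. \<Union>SA \<in> Pow (dyadic_cube_indices j l). \<Union>SB \<in> Pow (dyadic_cube_indices (n - m - j + 1) l).
       devset n l m j SA SB (tau ls ns \<delta>s \<epsilon> t m) (\<epsilon> t / 3)))"
      unfolding Bad_def n_def[symmetric] l_def[symmetric] M_def[symmetric]
      by (rule measure_UNION_le) (auto intro!: sets.finite_UN devset_sets simp: finite_idxset)
    also have "\<dots> \<le> (\<Sum>m\<in>{1..M}. K1 * \<delta> * (1 / 2^m))"
      using mb by (intro sum_mono) auto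
    also have "\<dots> = K1 * \<delta> * (\<Sum>m\<in>{1..M}. 1 / 2^m)" by (simp add: sum_distrib_left)
    also have "\<dots> \<le> K1 * \<delta> * 1"
      using K1 \<delta> geom_le1 by (intro mult_left_mono) auto
    finally show ?thesis unfolding \<delta>_def by simp
  qed
  have summB: "summable (\<lambda>t. measure \<mu> (Bad t))"
    by (rule summable_comparison_test[OF _ summable_mult[OF dsum, of K1]]) (use Ble in auto)
  have "AE \<omega> in \<mu>. eventually (\<lambda>t. \<omega> \<in> space \<mu> - Bad t) sequentially"
    by (rule borel_cantelli_AE1) (auto simp: Bsets summB less_top[symmetric])
  then show ?thesis
    by (rule AE_mp) (auto elim!: eventually_mono simp: Bad_def)
qed

end

definition Alg :: "nat \<Rightarrow> nat set \<Rightarrow> (nat \<Rightarrow> real) set set" where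
  "Alg a K = {cyl a k l S | k l S. k \<in> K \<and> S \<subseteq> dyadic_cube_indices k l}"

definition sd :: "'a set \<Rightarrow> 'a set \<Rightarrow> 'a set" where
  "sd X Y = (X - Y) \<union> (Y - X)"

lemma Alg_sub: "Alg a K \<subseteq> sets Omega"
  unfolding Alg_def using cyl_sets by auto

lemma Alg_Pow: "Alg a K \<subseteq> Pow (space Omega)"
  unfolding Alg_def by (auto dest!: subsetD[OF cyl_space])

lemma Alg_empty: assumes "K \<noteq> {}" shows "{} \<in> Alg a K"
proof -
  obtain k where "k \<in> K" using assms by auto
  moreover have "cyl a k 0 {} = {}" unfolding cyl_def by auto
  ultimately show ?thesis unfolding Alg_def by blast
qed

lemma Alg_compl: "X \<in> Alg a K \<Longrightarrow> space Omega - X \<in> Alg a K"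
  unfolding Alg_def using cyl_compl by blast

lemma Alg_Un: assumes K: "\<And>k1 k2. k1 \<in> K \<Longrightarrow> k2 \<in> K \<Longrightarrow> max k1 k2 \<in> K"
  and X: "X \<in> Alg a K" and Y: "Y \<in> Alg a K"
  shows "X \<union> Y \<in> Alg a K"
proof -
  obtain k1 l1 S1 where 1: "X = cyl a k1 l1 S1" "k1 \<in> K" using X unfolding Alg_def by auto
  obtain k2 l2 S2 where 2: "Y = cyl a k2 l2 S2" "k2 \<in> K" using Y unfolding Alg_def by auto
  define k where "k = max k1 k2"
  define l where "l = max l1 l2"
  have "X = cyl a k l (lift_set k1 l1 k l S1)" unfolding 1 k_def l_def by (rule cyl_lift) auto
  moreover have "Y = cyl a k l (lift_set k2 l2 k l S2)" unfolding 2 k_def l_def by (rule cyl_lift) auto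
  ultimately have "X \<union> Y = cyl a k l (lift_set k1 l1 k l S1 \<union> lift_set k2 l2 k l S2)" by (simp add: cyl_Un)
  moreover have "k \<in> K" unfolding k_def using 1 2 K by auto
  moreover have "lift_set k1 l1 k l S1 \<union> lift_set k2 l2 k l S2 \<subseteq> dyadic_cube_indices k l"
    using lift_set_sub by blast
  ultimately show ?thesis unfolding Alg_def by blast
qed

lemma Alg_finite_UN: assumes K: "\<And>k1 k2. k1 \<in> K \<Longrightarrow> k2 \<in> K \<Longrightarrow> max k1 k2 \<in> K" "K \<noteq> {}"
  shows "finite I \<Longrightarrow> (\<And>i. i \<in> I \<Longrightarrow> F i \<in> Alg a K) \<Longrightarrow> (\<Union>i\<in>I. F i) \<in> Alg a K"
proof (induction I rule: finite_induct)
  case empty then show ?case using Alg_empty[OF K(2)] by simp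
next
  case (insert x I) then show ?case using Alg_Un[OF K(1)] by simp
qed

lemma gen_in_Alg:
  assumes T: "\<And>t. t \<in> T \<Longrightarrow> \<exists>k\<in>K. a < t \<and> t \<le> a + k"
  shows "gen_sigma T \<subseteq> sigma_sets (space Omega) (Alg a K)"
proof -
  define M' where "M' = sigma (space Omega) (Alg a K)"
  have sM: "sets M' = sigma_sets (space Omega) (Alg a K)" unfolding M'_def using Alg_Pow by (rule sets_measure_of)
  have spM: "space M' = space Omega" unfolding M'_def using Alg_Pow by (rule space_measure_of)
  have cm: "coord t \<in> borel_measurable M'" if t: "t \<in> T" for t
  proof -
    obtain k where k: "k \<in> K" "a < t" "t \<le> a + k" using T[OF t] by auto
    define r where "r = t - 1 - a"
    have r: "r < k" "a + r = t - 1" unfolding r_def using k by auto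
    define f where "f l \<omega> = real (idx l (\<omega> (t - 1))) / 2^l" for l \<omega>
    have fm: "f l \<in> borel_measurable M'" for l
    proof (rule measurableI)
      fix U :: "real set" assume "U \<in> sets borel"
      have "f l -` U \<inter> space M' = cyl a k l {c \<in> dyadic_cube_indices k l. real (c ! r) / 2^l \<in> U}"
        unfolding spM cyl_def f_def using r code_in by (auto simp: code_nth)
      also have "\<dots> \<in> sets M'" unfolding sM Alg_def using k by blast
      finally show "f l -` U \<inter> space M' \<in> sets M'" .
    qed simp
    have conv: "(\<lambda>l. f l \<omega>) \<longlonglongrightarrow> coord t \<omega>" if "\<omega> \<in> space M'" for \<omega>
    proof -
      have w: "\<omega> (t - 1) \<in> {0..1}" using that spM space_OmegaD by auto
      have "(\<lambda>l. f l \<omega> - \<omega> (t - 1)) \<longlonglongrightarrow> 0"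
      proof (rule Lim_null_comparison)
        show "\<forall>\<^sub>F l in sequentially. norm (f l \<omega> - \<omega> (t - 1)) \<le> inverse (2 ^ l)"
          using idx_approx[OF w] unfolding f_def by (simp add: divide_inverse)
        show "(\<lambda>l. inverse ((2::real) ^ l)) \<longlonglongrightarrow> 0" by (rule LIMSEQ_inverse_realpow_zero) simp
      qed
      then show ?thesis unfolding coord_def by (rule LIM_zero_cancel)
    qed
    show ?thesis by (rule borel_measurable_LIMSEQ_real[OF conv fm])
  qed
  have "(\<Union>t\<in>T. {coord t -` B \<inter> space Omega | B. B \<in> sets (borel :: real measure)}) \<subseteq> sigma_sets (space Omega) (Alg a K)"
  proof clarify
    fix t B assume "t \<in> T" "B \<in> sets (borel :: real measure)"
    then have "coord t -` B \<inter> space M' \<in> sets M'" using cm by (intro measurable_sets) auto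
    then show "coord t -` B \<inter> space Omega \<in> sigma_sets (space Omega) (Alg a K)" using sM spM by simp
  qed
  then show ?thesis unfolding gen_sigma_def by (rule sigma_sets_mono)
qed

context proc
begin

lemma approx:
  assumes K: "\<And>k1 k2. k1 \<in> K \<Longrightarrow> k2 \<in> K \<Longrightarrow> max k1 k2 \<in> K" "K \<noteq> {}"
  shows "E \<in> sigma_sets (space Omega) (Alg a K) \<Longrightarrow> 0 < e \<Longrightarrow> \<exists>C\<in>Alg a K. measure \<mu> (sd E C) < e"
proof (induction arbitrary: e rule: sigma_sets.induct)
  case (Basic E) then show ?case by (intro bexI[of _ E]) (auto simp: sd_def)
next
  case Empty then show ?case using Alg_empty[OF K(2)] by (intro bexI[of _ "{}"]) (auto simp: sd_def)
next
  case (Compl E)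
  obtain C where C: "C \<in> Alg a K" "measure \<mu> (sd E C) < e" using Compl by auto
  have "E \<subseteq> space Omega" using Compl.hyps sigma_sets_into_sp[OF Alg_Pow] by blast
  moreover have "C \<subseteq> space Omega" using C(1) Alg_Pow by blast
  ultimately have "sd (space Omega - E) (space Omega - C) = sd E C" unfolding sd_def by blast
  then show ?case using C Alg_compl by metis
next
  case (Union A)
  have SS: "sigma_sets (space Omega) (Alg a K) \<subseteq> sets \<mu>"
    unfolding sets_mu by (rule sets.sigma_sets_subset[OF Alg_sub])
  have As: "A i \<in> sets \<mu>" for i using Union.hyps SS by blast
  have Algs: "X \<in> Alg a K \<Longrightarrow> X \<in> sets \<mu>" for X using Alg_sub sets_mu by blast
  define B where "B N = (\<Union>i<N. A i)" for N
  have Bs: "B N \<in> sets \<mu>" for N unfolding B_def using As by auto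
  have Binc: "incseq B" unfolding B_def incseq_def
    by (auto intro!: UN_mono) (meson lessThan_iff order_less_le_trans)
  have BU: "(\<Union>N. B N) = (\<Union>i. A i)" unfolding B_def by auto
  have "(\<lambda>N. measure \<mu> (B N)) \<longlonglongrightarrow> measure \<mu> (\<Union>i. A i)"
    using finite_Lim_measure_incseq[of B] Bs Binc BU by auto
  then have "eventually (\<lambda>N. measure \<mu> (\<Union>i. A i) - e / 2 < measure \<mu> (B N)) sequentially"
    using Union.prems by (intro order_tendstoD(1)) auto
  then obtain N0 where "\<forall>N\<ge>N0. measure \<mu> (\<Union>i. A i) - e / 2 < measure \<mu> (B N)"
    unfolding eventually_sequentially by blast
  then have "measure \<mu> (\<Union>i. A i) - measure \<mu> (B N0) < e / 2" by auto
  then obtain N where N: "measure \<mu> (\<Union>i. A i) - measure \<mu> (B N) < e / 2" by blast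
  have "\<forall>i. \<exists>C\<in>Alg a K. measure \<mu> (sd (A i) C) < e / (2 * (real N + 1))"
    using Union.IH Union.prems by (simp add: divide_pos_pos)
  then obtain Cf where Cf: "\<And>i. Cf i \<in> Alg a K" "\<And>i. measure \<mu> (sd (A i) (Cf i)) < e / (2 * (real N + 1))"
    by metis
  define C where "C = (\<Union>i<N. Cf i)"
  have CA: "C \<in> Alg a K" unfolding C_def using Alg_finite_UN[OF K] Cf by auto
  have sub: "sd (\<Union>i. A i) C \<subseteq> ((\<Union>i. A i) - B N) \<union> (\<Union>i<N. sd (A i) (Cf i))"
    unfolding sd_def C_def B_def by blast
  have sds: "sd X Y \<in> sets \<mu>" if "X \<in> sets \<mu>" "Y \<in> sets \<mu>" for X Y unfolding sd_def using that by auto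
  have "measure \<mu> (sd (\<Union>i. A i) C) \<le> measure \<mu> (((\<Union>i. A i) - B N) \<union> (\<Union>i<N. sd (A i) (Cf i)))"
  proof (rule finite_measure_mono[OF sub])
    have U: "(\<Union>i. A i) \<in> sets \<mu>" using As by auto
    have V: "(\<Union>i<N. sd (A i) (Cf i)) \<in> sets \<mu>" using As Cf Algs sds by (intro sets.finite_UN) auto
    show "((\<Union>i. A i) - B N) \<union> (\<Union>i<N. sd (A i) (Cf i)) \<in> sets \<mu>" using U V Bs by auto
  qed
  also have "\<dots> \<le> measure \<mu> ((\<Union>i. A i) - B N) + measure \<mu> (\<Union>i<N. sd (A i) (Cf i))"
    using As Cf Algs sds Bs by (intro measure_Un_le) auto
  also have "measure \<mu> ((\<Union>i. A i) - B N) = measure \<mu> (\<Union>i. A i) - measure \<mu> (B N)"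
    using As Bs by (intro finite_measure_Diff) (auto simp: B_def)
  also have "measure \<mu> (\<Union>i<N. sd (A i) (Cf i)) \<le> (\<Sum>i<N. measure \<mu> (sd (A i) (Cf i)))"
    using As Cf Algs sds by (intro measure_UNION_le) auto
  also have "\<dots> \<le> (\<Sum>i<N. e / (2 * (real N + 1)))"
    using Cf by (intro sum_mono less_imp_le) auto
  also have "\<dots> = real N * (e / (2 * (real N + 1)))" by simp
  also have "\<dots> < e / 2"
    using Union.prems by (simp add: field_simps)
  finally have "measure \<mu> (sd (\<Union>i. A i) C) < e" using N by linarith
  then show ?case using CA by blast
qed

lemma approx_past: assumes "A \<in> gen_sigma {1..j}" "0 < e"
  shows "\<exists>l S. S \<subseteq> dyadic_cube_indices j l \<and> measure \<mu> (sd A (cyl 0 j l S)) < e"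
proof -
  have A: "A \<in> sigma_sets (space Omega) (Alg 0 {j})"
    using gen_in_Alg[of "{1..j}" "{j}" 0] assms(1) by auto
  have "\<exists>C\<in>Alg 0 {j}. measure \<mu> (sd A C) < e"
    by (rule approx) (use A assms(2) in auto)
  then obtain C where "C \<in> Alg 0 {j}" "measure \<mu> (sd A C) < e" by blast
  then show ?thesis unfolding Alg_def by auto
qed

lemma approx_fut: assumes "1 \<le> s" "B \<in> gen_sigma {s..}" "0 < e"
  shows "\<exists>k l S. S \<subseteq> dyadic_cube_indices k l \<and> measure \<mu> (sd B (cyl (s - 1) k l S)) < e"
proof -
  have B: "B \<in> sigma_sets (space Omega) (Alg (s - 1) UNIV)"
  proof (rule subsetD[OF gen_in_Alg assms(2)])
    fix t assume "t \<in> {s..}"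
    then show "\<exists>k\<in>UNIV. s - 1 < t \<and> t \<le> s - 1 + k" using assms(1) by (intro bexI[of _ t]) auto
  qed
  have "\<exists>C\<in>Alg (s - 1) UNIV. measure \<mu> (sd B C) < e"
    by (rule approx) (use B assms(3) in auto)
  then obtain C where "C \<in> Alg (s - 1) UNIV" "measure \<mu> (sd B C) < e" by blast
  then show ?thesis unfolding Alg_def by auto
qed

end

context proc
begin

definition goodt where
  "goodt Ms ls ns \<delta>s \<epsilon> t \<omega> \<longleftrightarrow> (\<forall>m\<in>{1..Ms t}. \<forall>j\<in>{1..ns t - m}.
     \<forall>SA \<in> Pow (dyadic_cube_indices j (ls t)). \<forall>SB \<in> Pow (dyadic_cube_indices (ns t - m - j + 1) (ls t)).
       \<omega> \<notin> devset (ns t) (ls t) m j SA SB (tau ls ns \<delta>s \<epsilon> t m) (\<epsilon> t / 3))"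

lemma good_ahval:
  assumes g: "goodt Ms ls ns \<delta>s \<epsilon> t \<omega>" and w: "\<omega> \<in> space \<mu>"
    and m: "m \<in> {1..Ms t}" and j: "j \<in> {1..ns t - m}"
    and SA: "SA \<subseteq> dyadic_cube_indices j (ls t)" and SB: "SB \<subseteq> dyadic_cube_indices (ns t - m - j + 1) (ls t)"
  shows "\<bar>ahval \<omega> (tau ls ns \<delta>s \<epsilon> t m) (ns t) (ls t) m j (\<Union>(dyadic_cube (ls t) ` SA)) (\<Union>(dyadic_cube (ls t) ` SB))
          - \<bar>measure \<mu> (GG (ns t) (ls t) m j SA SB 0) - measure \<mu> (cyl 0 j (ls t) SA) * measure \<mu> (cyl 0 (ns t - m - j + 1) (ls t) SB)\<bar>\<bar>
         < \<epsilon> t"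
proof -
  have "\<omega> \<notin> devset (ns t) (ls t) m j SA SB (tau ls ns \<delta>s \<epsilon> t m) (\<epsilon> t / 3)"
    using g m j SA SB unfolding goodt_def by blast
  from not_devset[OF w this SA SB] show ?thesis unfolding ahval_def
    by (intro le_less_trans[OF abs_triangle_ineq3]) simp
qed

lemma measure_sd: assumes "X \<in> sets \<mu>" "Y \<in> sets \<mu>"
  shows "\<bar>measure \<mu> X - measure \<mu> Y\<bar> \<le> measure \<mu> (sd X Y)"
proof -
  have sds: "sd X Y \<in> sets \<mu>" unfolding sd_def using assms by auto
  have "measure \<mu> X \<le> measure \<mu> (Y \<union> sd X Y)" using assms sds by (intro finite_measure_mono) (auto simp: sd_def)
  also have "\<dots> \<le> measure \<mu> Y + measure \<mu> (sd X Y)" using assms sds by (intro measure_Un_le) auto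
  finally have 1: "measure \<mu> X \<le> measure \<mu> Y + measure \<mu> (sd X Y)" .
  have "measure \<mu> Y \<le> measure \<mu> (X \<union> sd X Y)" using assms sds by (intro finite_measure_mono) (auto simp: sd_def)
  also have "\<dots> \<le> measure \<mu> X + measure \<mu> (sd X Y)" using assms sds by (intro measure_Un_le) auto
  finally have 2: "measure \<mu> Y \<le> measure \<mu> X + measure \<mu> (sd X Y)" .
  show ?thesis using 1 2 by linarith
qed

lemma cov_perturb:
  assumes s: "A \<in> sets \<mu>" "B \<in> sets \<mu>" "A' \<in> sets \<mu>" "B' \<in> sets \<mu>"
    and a: "measure \<mu> (sd A A') < \<eta>" and b: "measure \<mu> (sd B B') < \<eta>"
  shows "\<bar>measure \<mu> (A \<inter> B) - measure \<mu> A * measure \<mu> B\<bar> - 4 * \<eta> < 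
         \<bar>measure \<mu> (A' \<inter> B') - measure \<mu> A' * measure \<mu> B'\<bar>"
proof -
  have sds: "sd A A' \<in> sets \<mu>" "sd B B' \<in> sets \<mu>" unfolding sd_def using s by auto
  have "\<bar>measure \<mu> (A \<inter> B) - measure \<mu> (A' \<inter> B')\<bar> \<le> measure \<mu> (sd (A \<inter> B) (A' \<inter> B'))"
    using s by (intro measure_sd) auto
  also have "\<dots> \<le> measure \<mu> (sd A A' \<union> sd B B')"
    using s sds by (intro finite_measure_mono) (auto simp: sd_def)
  also have "\<dots> \<le> measure \<mu> (sd A A') + measure \<mu> (sd B B')" using sds by (rule measure_Un_le)
  finally have i: "\<bar>measure \<mu> (A \<inter> B) - measure \<mu> (A' \<inter> B')\<bar> < 2 * \<eta>" using a b by linarith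
  have da: "\<bar>measure \<mu> A - measure \<mu> A'\<bar> < \<eta>" using measure_sd[OF s(1,3)] a by linarith
  have db: "\<bar>measure \<mu> B - measure \<mu> B'\<bar> < \<eta>" using measure_sd[OF s(2,4)] b by linarith
  have pb: "0 \<le> measure \<mu> B" "measure \<mu> B \<le> 1" "0 \<le> measure \<mu> A'" "measure \<mu> A' \<le> 1" by auto
  have "\<bar>measure \<mu> A * measure \<mu> B - measure \<mu> A' * measure \<mu> B'\<bar>
     = \<bar>(measure \<mu> A - measure \<mu> A') * measure \<mu> B + measure \<mu> A' * (measure \<mu> B - measure \<mu> B')\<bar>"
    by (simp add: algebra_simps)
  also have "\<dots> \<le> \<bar>(measure \<mu> A - measure \<mu> A') * measure \<mu> B\<bar> + \<bar>measure \<mu> A' * (measure \<mu> B - measure \<mu> B')\<bar>"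
    by (rule abs_triangle_ineq)
  also have "\<dots> = \<bar>measure \<mu> A - measure \<mu> A'\<bar> * measure \<mu> B + measure \<mu> A' * \<bar>measure \<mu> B - measure \<mu> B'\<bar>"
    using pb by (simp add: abs_mult)
  also have "\<dots> \<le> \<eta> * 1 + 1 * \<eta>"
    using da db pb by (intro add_mono mult_mono) auto
  finally have p: "\<bar>measure \<mu> A * measure \<mu> B - measure \<mu> A' * measure \<mu> B'\<bar> \<le> 2 * \<eta>" by simp
  show ?thesis using i p by linarith
qed

end

context proc
begin

lemma R_case:
  assumes ns_Ms: "\<And>t. ns t > Ms t" and R: "\<And>m. m \<ge> 1 \<Longrightarrow> alpha_coef \<mu> m \<le> \<gamma> m"
    and good: "AE \<omega> in \<mu>. eventually (\<lambda>t. goodt Ms ls ns \<delta>s \<epsilon> t \<omega>) sequentially"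
  shows "AE \<omega> in \<mu>. (\<lambda>t. test_g \<gamma> Ms ls ns \<delta>s \<epsilon> t \<omega>) \<longlonglongrightarrow> 1"
proof -
  have one: "test_g \<gamma> Ms ls ns \<delta>s \<epsilon> t \<omega> = 1" if g: "goodt Ms ls ns \<delta>s \<epsilon> t \<omega>" and w: "\<omega> \<in> space \<mu>" for t \<omega>
  proof -
    have "alpha_hat_t ls ns \<delta>s \<epsilon> t \<omega> m \<le> \<gamma> m + \<epsilon> t" if m: "m \<in> {1..Ms t}" for m
      unfolding alpha_hat_t_def
    proof (rule alpha_hat_le)
      show "m < ns t" using m ns_Ms[of t] by auto
      fix j A B assume j: "j \<in> {1..ns t - m}" and A: "A \<in> dyadic_unions j (ls t)"
        and B: "B \<in> dyadic_unions (ns t - m - j + 1) (ls t)"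
      obtain SA where SA: "SA \<subseteq> dyadic_cube_indices j (ls t)" "A = \<Union>(dyadic_cube (ls t) ` SA)"
        using A by (rule dyadic_unionsE)
      obtain SB where SB: "SB \<subseteq> dyadic_cube_indices (ns t - m - j + 1) (ls t)" "B = \<Union>(dyadic_cube (ls t) ` SB)"
        using B by (rule dyadic_unionsE)
      have 1: "\<bar>ahval \<omega> (tau ls ns \<delta>s \<epsilon> t m) (ns t) (ls t) m j A B
          - \<bar>measure \<mu> (GG (ns t) (ls t) m j SA SB 0) - measure \<mu> (cyl 0 j (ls t) SA) * measure \<mu> (cyl 0 (ns t - m - j + 1) (ls t) SB)\<bar>\<bar>
         < \<epsilon> t" unfolding SA(2) SB(2) by (rule good_ahval[OF g w m j SA(1) SB(1)])
      have 2: "\<bar>measure \<mu> (GG (ns t) (ls t) m j SA SB 0) - measure \<mu> (cyl 0 j (ls t) SA) * measure \<mu> (cyl 0 (ns t - m - j + 1) (ls t) SB)\<bar>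
         \<le> alpha_coef \<mu> m"
        using m j ns_Ms[of t] by (intro GG_alpha) auto
      have 3: "alpha_coef \<mu> m \<le> \<gamma> m" using m R by auto
      show "ahval \<omega> (tau ls ns \<delta>s \<epsilon> t m) (ns t) (ls t) m j A B \<le> \<gamma> m + \<epsilon> t"
        using 1 2 3 by linarith
    qed
    then show ?thesis unfolding test_g_def by auto
  qed
  from good show ?thesis
  proof (rule AE_mp)
    show "AE \<omega> in \<mu>. eventually (\<lambda>t. goodt Ms ls ns \<delta>s \<epsilon> t \<omega>) sequentially \<longrightarrow> (\<lambda>t. test_g \<gamma> Ms ls ns \<delta>s \<epsilon> t \<omega>) \<longlonglongrightarrow> 1"
    proof (rule AE_I2, rule impI)
      fix \<omega> assume w: "\<omega> \<in> space \<mu>" and ev: "eventually (\<lambda>t. goodt Ms ls ns \<delta>s \<epsilon> t \<omega>) sequentially"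
      show "(\<lambda>t. test_g \<gamma> Ms ls ns \<delta>s \<epsilon> t \<omega>) \<longlonglongrightarrow> 1"
        by (rule tendsto_eventually) (use ev in \<open>auto elim!: eventually_mono intro: one[OF _ w]\<close>)
    qed
  qed
qed

lemma nonR_case:
  assumes ns_Ms: "\<And>t. ns t > Ms t" and m0: "1 \<le> m0" and viol: "\<gamma> m0 < alpha_coef \<mu> m0"
    and Ms: "strict_mono Ms" and ls: "strict_mono ls" and ns: "strict_mono ns"
    and eps: "\<epsilon> \<longlonglongrightarrow> 0"
    and good: "AE \<omega> in \<mu>. eventually (\<lambda>t. goodt Ms ls ns \<delta>s \<epsilon> t \<omega>) sequentially"
  shows "AE \<omega> in \<mu>. (\<lambda>t. test_g \<gamma> Ms ls ns \<delta>s \<epsilon> t \<omega>) \<longlonglongrightarrow> -1"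
proof -
  obtain j where j: "j \<in> {1..}" and
    "\<gamma> m0 < (\<Squnion>p\<in>gen_sigma {1..j} \<times> gen_sigma {j+m0..}. covf p)"
    using viol unfolding alpha_eq by (subst (asm) less_cSUP_iff[OF _ outer_bdd]) auto
  then obtain A B where AB: "A \<in> gen_sigma {1..j}" "B \<in> gen_sigma {j+m0..}" and lt: "\<gamma> m0 < covf (A, B)"
    by (subst (asm) less_cSUP_iff[OF inner_ne inner_bdd]) auto
  have j1: "1 \<le> j" using j by simp
  define d where "d = covf (A, B) - \<gamma> m0"
  have d: "d > 0" unfolding d_def using lt by simp
  obtain l1 S1 where S1: "S1 \<subseteq> dyadic_cube_indices j l1" "measure \<mu> (sd A (cyl 0 j l1 S1)) < d / 8"
    using approx_past[OF AB(1), of "d/8"] d by auto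
  obtain k l2 S2 where S2: "S2 \<subseteq> dyadic_cube_indices k l2" "measure \<mu> (sd B (cyl (j + m0 - 1) k l2 S2)) < d / 8"
    using approx_fut[of "j + m0" B "d/8"] AB(2) d m0 by auto
  define A' where "A' = cyl 0 j l1 S1"
  define B' where "B' = cyl (j + m0 - 1) k l2 S2"
  have sets: "A \<in> sets \<mu>" "B \<in> sets \<mu>" "A' \<in> sets \<mu>" "B' \<in> sets \<mu>"
    using AB gen_sigma_sets_mu unfolding A'_def B'_def by auto
  have X: "covf (A, B) - 4 * (d / 8) < \<bar>measure \<mu> (A' \<inter> B') - measure \<mu> A' * measure \<mu> B'\<bar>"
    unfolding covf_def fst_conv snd_conv
    by (rule cov_perturb[OF sets]) (use S1(2) S2(2) in \<open>simp_all add: A'_def B'_def\<close>)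
  have cov': "\<gamma> m0 + d / 2 < \<bar>measure \<mu> (A' \<inter> B') - measure \<mu> A' * measure \<mu> B'\<bar>"
    using X d_def by linarith
  have ev1: "eventually (\<lambda>t. max l1 l2 \<le> ls t \<and> j + m0 + k \<le> ns t \<and> m0 \<le> Ms t \<and> \<epsilon> t < d / 4) sequentially"
  proof -
    have "eventually (\<lambda>t. \<epsilon> t < d / 4) sequentially" using eps d by (intro order_tendstoD(2)) auto
    moreover have "eventually (\<lambda>t. max l1 l2 + (j + m0 + k) + m0 \<le> t) sequentially"
      by (rule eventually_ge_at_top)
    ultimately show ?thesis
    proof eventually_elim
      case (elim t)
      have "t \<le> ls t" "t \<le> ns t" "t \<le> Ms t" using ls ns Ms by (auto intro: strict_mono_imp_increasing)
      then show ?case using elim by auto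
    qed
  qed
  have minus: "test_g \<gamma> Ms ls ns \<delta>s \<epsilon> t \<omega> = -1"
    if g: "goodt Ms ls ns \<delta>s \<epsilon> t \<omega>" and w: "\<omega> \<in> space \<mu>"
      and c: "max l1 l2 \<le> ls t \<and> j + m0 + k \<le> ns t \<and> m0 \<le> Ms t \<and> \<epsilon> t < d / 4" for t \<omega>
  proof -
    define n where "n = ns t"
    define l where "l = ls t"
    define j' where "j' = n - m0 - j + 1"
    have kj': "k \<le> j'" unfolding j'_def n_def using c by auto
    have jn: "j \<in> {1..n - m0}" using c j1 unfolding n_def by auto
    define SA where "SA = lift_set j l1 j l S1"
    define SB where "SB = lift_set k l2 j' l S2"
    have SA: "SA \<subseteq> dyadic_cube_indices j l" unfolding SA_def by (rule lift_set_sub)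
    have SB: "SB \<subseteq> dyadic_cube_indices j' l" unfolding SB_def by (rule lift_set_sub)
    have A'eq: "A' = cyl 0 j l SA" unfolding A'_def SA_def using c unfolding l_def by (intro cyl_lift) auto
    have B'eq: "B' = cyl (j + m0 - 1) j' l SB" unfolding B'_def SB_def using c kj' unfolding l_def by (intro cyl_lift) auto
    have GGeq: "GG n l m0 j SA SB 0 = A' \<inter> B'" unfolding GG_def A'eq B'eq j'_def by simp
    have pB: "measure \<mu> (cyl 0 j' l SB) = measure \<mu> B'" unfolding B'eq by (rule measure_cyl_shift[symmetric])
    have m0M: "m0 \<in> {1..Ms t}" using m0 c by auto
    have 1: "\<bar>ahval \<omega> (tau ls ns \<delta>s \<epsilon> t m0) n l m0 j (\<Union>(dyadic_cube l ` SA)) (\<Union>(dyadic_cube l ` SB))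
          - \<bar>measure \<mu> (A' \<inter> B') - measure \<mu> A' * measure \<mu> B'\<bar>\<bar> < \<epsilon> t"
      using good_ahval[OF g w m0M, of j SA SB] jn SA SB pB GGeq A'eq unfolding n_def l_def j'_def by simp
    have 2: "ahval \<omega> (tau ls ns \<delta>s \<epsilon> t m0) n l m0 j (\<Union>(dyadic_cube l ` SA)) (\<Union>(dyadic_cube l ` SB))
          \<le> alpha_hat_t ls ns \<delta>s \<epsilon> t \<omega> m0"
      unfolding alpha_hat_t_def n_def[symmetric] l_def[symmetric]
      using jn SA SB unfolding j'_def by (intro alpha_hat_ge dyadic_unionsI) auto
    have "\<gamma> m0 + \<epsilon> t < alpha_hat_t ls ns \<delta>s \<epsilon> t \<omega> m0" using 1 2 cov' c by linarith
    then show ?thesis unfolding test_g_def using m0M by force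
  qed
  from good show ?thesis
  proof (rule AE_mp)
    show "AE \<omega> in \<mu>. eventually (\<lambda>t. goodt Ms ls ns \<delta>s \<epsilon> t \<omega>) sequentially \<longrightarrow> (\<lambda>t. test_g \<gamma> Ms ls ns \<delta>s \<epsilon> t \<omega>) \<longlonglongrightarrow> -1"
    proof (rule AE_I2, rule impI)
      fix \<omega> assume w: "\<omega> \<in> space \<mu>" and ev: "eventually (\<lambda>t. goodt Ms ls ns \<delta>s \<epsilon> t \<omega>) sequentially"
      have "eventually (\<lambda>t. test_g \<gamma> Ms ls ns \<delta>s \<epsilon> t \<omega> = -1) sequentially"
        using ev ev1 by eventually_elim (auto intro: minus[OF _ w])
      then show "(\<lambda>t. test_g \<gamma> Ms ls ns \<delta>s \<epsilon> t \<omega>) \<longlonglongrightarrow> -1"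
        by (rule tendsto_eventually)
    qed
  qed
qed

end

theorem theorem7:
  fixes \<gamma> :: "nat \<Rightarrow> real"
    and Ms ls ns :: "nat \<Rightarrow> nat"
    and \<delta> :: real and \<delta>s \<epsilon> :: "nat \<Rightarrow> real"
    and \<mu> :: "(nat \<Rightarrow> real) measure"
  assumes gamma_range: "\<And>m. 0 \<le> \<gamma> m \<and> \<gamma> m \<le> 1"
    and Ms: "strict_mono Ms" "\<And>t. Ms t > 0"
    and ls: "strict_mono ls" "\<And>t. ls t > 0"
    and ns: "strict_mono ns" "\<And>t. ns t > 0"
    and ns_Ms: "\<And>t. ns t > Ms t"
    and delta: "0 < \<delta>" "\<delta> < 1" "\<And>t. \<delta>s t > 0" "\<delta>s sums \<delta>"
    and eps: "decseq \<epsilon>" "\<And>t. \<epsilon> t > 0" "\<epsilon> \<longlonglongrightarrow> 0"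
    and mu: "\<mu> \<in> class_C"
  shows "AE \<omega> in \<mu>. (\<lambda>t. test_g \<gamma> Ms ls ns \<delta>s \<epsilon> t \<omega>) \<longlonglongrightarrow>
                       (if \<mu> \<in> class_R \<gamma> then 1 else -1)"
proof -
  interpret proc \<mu> by unfold_locales (rule mu)
  have good: "AE \<omega> in \<mu>. eventually (\<lambda>t. goodt Ms ls ns \<delta>s \<epsilon> t \<omega>) sequentially"
    unfolding goodt_def
    by (rule eventually_good) (use ls ns_Ms delta eps in \<open>auto simp: sums_summable\<close>)
  have pd: "process_distribution \<mu>" using mu unfolding class_C_def by auto
  show ?thesis
  proof (cases "\<mu> \<in> class_R \<gamma>")
    case True
    then have R: "\<And>m. m \<ge> 1 \<Longrightarrow> alpha_coef \<mu> m \<le> \<gamma> m" unfolding class_R_def by auto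
    show ?thesis using R_case[where \<gamma>=\<gamma> and Ms=Ms and ls=ls and ns=ns and \<delta>s=\<delta>s and \<epsilon>=\<epsilon>, OF ns_Ms R good] True by simp
  next
    case False
    then obtain m0 where m0: "1 \<le> m0" "\<gamma> m0 < alpha_coef \<mu> m0"
      using pd unfolding class_R_def by (auto simp: not_le)
    show ?thesis using nonR_case[where \<gamma>=\<gamma> and Ms=Ms and ls=ls and ns=ns and \<delta>s=\<delta>s and \<epsilon>=\<epsilon>, OF ns_Ms m0 Ms(1) ls(1) ns(1) eps(3) good] False by simp
  qed
qed


end
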